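(* Let $\mathcal{C}$ be a deflation-exact category and let $\mathcal{A}\subseteq\mathcal{C}$ be an admissibly deflation-percolating subcategory. Then $S_{\mathcal{A}}=S_{\mathcal{A}}\cap\mathrm{Adm}(\mathcal{C})$; in particular every weak isomorphism is admissible. Moreover, $S_{\mathcal{A}}$ is a right multiplicative system in $\mathcal{C}$ such that the commutative square in axiom RMS2 can always be chosen to be a pullback square; in particular, pullbacks along weak isomorphisms exist.
   Context: A conflation category is an additive category together with a class of kernel-cokernel pairs $A\xrightarrow{f}B\xrightarrow{g}C$ (i.e. $f=\ker g$ and $g=\operatorname{coker} f$), closed under isomorphisms, called conflations; the first morphism of a conflation is called an inflation ($\rightarrowtail$) and the second a deflation ($\twoheadrightarrow$). A deflation-exact category is a conflation category satisfying: (R0) $1_0$ is a deflation; (R1) the composition of two deflations is a deflation; (R2) the pullback of a deflation along any morphism exists and is a deflation. A morphism is admissible if it factors as a deflation followed by an inflation; $\mathrm{Adm}(\mathcal{C})$ is the set of admissible morphisms. A non-empty full subcategory $\mathcal{A}$ of a conflation category $\mathcal{C}$ is admissibly deflation-percolating if: (A1) for every conflation $A'\rightarrowtail A\twoheadrightarrow A''$ in $\mathcal{C}$, $A\in\mathcal{A}$ iff $A',A''\in\mathcal{A}$; (A2) every morphism $C\to A$ with $A\in\mathcal{A}$ factors as a deflation $C\twoheadrightarrow A'$ followed by an inflation $A'\rightarrowtail A$ with $A'\in\mathcal{A}$; (A3) if $a\colon C\rightarrowtail D$ is an inflation and $b\colon C\twoheadrightarrow A$ is a deflation with $A\in\mathcal{A}$,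 then the pushout of $a$ along $b$ exists and in the pushout square the map $D\to P$ is a deflation and $A\to P$ is an inflation. An $\mathcal{A}^{-1}$-inflation is an inflation whose cokernel lies in $\mathcal{A}$; an $\mathcal{A}^{-1}$-deflation is a deflation whose kernel lies in $\mathcal{A}$. The set $S_{\mathcal{A}}$ of weak isomorphisms consists of all finite composites of $\mathcal{A}^{-1}$-inflations and $\mathcal{A}^{-1}$-deflations. A set $S$ of morphisms is a right multiplicative system if: (RMS1) identities are in $S$ and $S$ is closed under composition; (RMS2) for every $f\colon Z\to W$ and $s\colon Y\to W$ with $s\in S$ there exist $t\colon X\to Z$ in $S$ and $g\colon X\to Y$ with $fg'$... precisely $f t = s g$; (RMS3) if $f,g\colon X\to Y$ and $s\in S$ with source $Y$ satisfy $sf=sg$, then there is $t\in S$ with target $X$ such that $ft=gt$. *)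

theory Defs
  imports Main
begin

record ('o,'m) addcat =
  Obj  :: "'o set"
  Mor  :: "'m set"
  Dom  :: "'m \<Rightarrow> 'o"
  Cod  :: "'m \<Rightarrow> 'o"
  Id   :: "'o \<Rightarrow> 'm"
  Comp :: "'m \<Rightarrow> 'm \<Rightarrow> 'm"   (* Comp g f = g \<circ> f *)
  Add  :: "'m \<Rightarrow> 'm \<Rightarrow> 'm"
  Zm   :: "'o \<Rightarrow> 'o \<Rightarrow> 'm"   (* zero morphism a \<rightarrow> b *)

definition hom :: "('o,'m,'x) addcat_scheme \<Rightarrow> 'o \<Rightarrow> 'o \<Rightarrow> 'm set" where
  "hom C a b = {f \<in> Mor C. Dom C f = a \<and> Cod C f = b}"

definition category :: "('o,'m,'x) addcat_scheme \<Rightarrow> bool" where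
  "category C \<longleftrightarrow>
     (\<forall>f\<in>Mor C. Dom C f \<in> Obj C \<and> Cod C f \<in> Obj C) \<and>
     (\<forall>a\<in>Obj C. Id C a \<in> hom C a a) \<and>
     (\<forall>f\<in>Mor C. \<forall>g\<in>Mor C. Cod C f = Dom C g \<longrightarrow> Comp C g f \<in> hom C (Dom C f) (Cod C g)) \<and>
     (\<forall>f\<in>Mor C. Comp C (Id C (Cod C f)) f = f \<and> Comp C f (Id C (Dom C f)) = f) \<and>
     (\<forall>f\<in>Mor C. \<forall>g\<in>Mor C. \<forall>h\<in>Mor C. Cod C f = Dom C g \<longrightarrow> Cod C g = Dom C h \<longrightarrow>
        Comp C h (Comp C g f) = Comp C (Comp C h g) f)"

definition preadditive :: "('o,'m,'x) addcat_scheme \<Rightarrow> bool" where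
  "preadditive C \<longleftrightarrow> category C \<and>
     (\<forall>a\<in>Obj C. \<forall>b\<in>Obj C.
        Zm C a b \<in> hom C a b \<and>
        (\<forall>f\<in>hom C a b. \<forall>g\<in>hom C a b. Add C f g \<in> hom C a b \<and> Add C f g = Add C g f) \<and>
        (\<forall>f\<in>hom C a b. \<forall>g\<in>hom C a b. \<forall>h\<in>hom C a b. Add C (Add C f g) h = Add C f (Add C g h)) \<and>
        (\<forall>f\<in>hom C a b. Add C f (Zm C a b) = f) \<and>
        (\<forall>f\<in>hom C a b. \<exists>g\<in>hom C a b. Add C f g = Zm C a b)) \<and>
     (\<forall>a\<in>Obj C. \<forall>b\<in>Obj C. \<forall>c\<in>Obj C. \<forall>f\<in>hom C a b. \<forall>g\<in>hom C a b. \<forall>h\<in>hom C b c.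
        Comp C h (Add C f g) = Add C (Comp C h f) (Comp C h g)) \<and>
     (\<forall>a\<in>Obj C. \<forall>b\<in>Obj C. \<forall>c\<in>Obj C. \<forall>f\<in>hom C a b. \<forall>g\<in>hom C b c. \<forall>h\<in>hom C b c.
        Comp C (Add C g h) f = Add C (Comp C g f) (Comp C h f))"

definition zero_object :: "('o,'m,'x) addcat_scheme \<Rightarrow> 'o \<Rightarrow> bool" where
  "zero_object C z \<longleftrightarrow> z \<in> Obj C \<and>
     (\<forall>a\<in>Obj C. (\<exists>!f. f \<in> hom C z a) \<and> (\<exists>!f. f \<in> hom C a z))"

definition is_biproduct ::
  "('o,'m,'x) addcat_scheme \<Rightarrow> 'o \<Rightarrow> 'o \<Rightarrow> 'o \<Rightarrow> 'm \<Rightarrow> 'm \<Rightarrow> 'm \<Rightarrow> 'm \<Rightarrow> bool" where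
  "is_biproduct C a b c i1 i2 p1 p2 \<longleftrightarrow>
     c \<in> Obj C \<and> i1 \<in> hom C a c \<and> i2 \<in> hom C b c \<and> p1 \<in> hom C c a \<and> p2 \<in> hom C c b \<and>
     Comp C p1 i1 = Id C a \<and> Comp C p2 i2 = Id C b \<and>
     Comp C p2 i1 = Zm C a b \<and> Comp C p1 i2 = Zm C b a \<and>
     Add C (Comp C i1 p1) (Comp C i2 p2) = Id C c"

definition additive :: "('o,'m,'x) addcat_scheme \<Rightarrow> bool" where
  "additive C \<longleftrightarrow> preadditive C \<and> (\<exists>z. zero_object C z) \<and>
     (\<forall>a\<in>Obj C. \<forall>b\<in>Obj C. \<exists>c i1 i2 p1 p2. is_biproduct C a b c i1 i2 p1 p2)"

definition iso :: "('o,'m,'x) addcat_scheme \<Rightarrow> 'm \<Rightarrow> bool" where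
  "iso C f \<longleftrightarrow> f \<in> Mor C \<and> (\<exists>g\<in>hom C (Cod C f) (Dom C f).
     Comp C g f = Id C (Dom C f) \<and> Comp C f g = Id C (Cod C f))"

definition is_kernel :: "('o,'m,'x) addcat_scheme \<Rightarrow> 'm \<Rightarrow> 'm \<Rightarrow> bool" where
  "is_kernel C f g \<longleftrightarrow> f \<in> Mor C \<and> g \<in> Mor C \<and> Cod C f = Dom C g \<and>
     Comp C g f = Zm C (Dom C f) (Cod C g) \<and>
     (\<forall>x\<in>Obj C. \<forall>h\<in>hom C x (Dom C g). Comp C g h = Zm C x (Cod C g) \<longrightarrow>
        (\<exists>!u. u \<in> hom C x (Dom C f) \<and> Comp C f u = h))"

definition is_cokernel :: "('o,'m,'x) addcat_scheme \<Rightarrow> 'm \<Rightarrow> 'm \<Rightarrow> bool" where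
  "is_cokernel C g f \<longleftrightarrow> f \<in> Mor C \<and> g \<in> Mor C \<and> Cod C f = Dom C g \<and>
     Comp C g f = Zm C (Dom C f) (Cod C g) \<and>
     (\<forall>x\<in>Obj C. \<forall>h\<in>hom C (Cod C f) x. Comp C h f = Zm C (Dom C f) x \<longrightarrow>
        (\<exists>!u. u \<in> hom C (Cod C g) x \<and> Comp C u g = h))"

definition kernel_cokernel_pair :: "('o,'m,'x) addcat_scheme \<Rightarrow> 'm \<Rightarrow> 'm \<Rightarrow> bool" where
  "kernel_cokernel_pair C f g \<longleftrightarrow> is_kernel C f g \<and> is_cokernel C g f"

text \<open>Pullback of the cospan f : Z \<rightarrow> W, s : Y \<rightarrow> W given by t : X \<rightarrow> Z, g : X \<rightarrow> Y.\<close>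
definition is_pullback :: "('o,'m,'x) addcat_scheme \<Rightarrow> 'm \<Rightarrow> 'm \<Rightarrow> 'm \<Rightarrow> 'm \<Rightarrow> bool" where
  "is_pullback C f s t g \<longleftrightarrow>
     f \<in> Mor C \<and> s \<in> Mor C \<and> t \<in> Mor C \<and> g \<in> Mor C \<and>
     Cod C f = Cod C s \<and> Cod C t = Dom C f \<and> Cod C g = Dom C s \<and> Dom C t = Dom C g \<and>
     Comp C f t = Comp C s g \<and>
     (\<forall>x\<in>Obj C. \<forall>h\<in>hom C x (Dom C f). \<forall>k\<in>hom C x (Dom C s).
        Comp C f h = Comp C s k \<longrightarrow>
        (\<exists>!u. u \<in> hom C x (Dom C t) \<and> Comp C t u = h \<and> Comp C g u = k))"

text \<open>Pushout of the span a : C \<rightarrow> D, b : C \<rightarrow> A given by p : D \<rightarrow> P, q : A \<rightarrow> P.\<close>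
definition is_pushout :: "('o,'m,'x) addcat_scheme \<Rightarrow> 'm \<Rightarrow> 'm \<Rightarrow> 'm \<Rightarrow> 'm \<Rightarrow> bool" where
  "is_pushout C a b p q \<longleftrightarrow>
     a \<in> Mor C \<and> b \<in> Mor C \<and> p \<in> Mor C \<and> q \<in> Mor C \<and>
     Dom C a = Dom C b \<and> Dom C p = Cod C a \<and> Dom C q = Cod C b \<and> Cod C p = Cod C q \<and>
     Comp C p a = Comp C q b \<and>
     (\<forall>x\<in>Obj C. \<forall>h\<in>hom C (Cod C a) x. \<forall>k\<in>hom C (Cod C b) x.
        Comp C h a = Comp C k b \<longrightarrow>
        (\<exists>!u. u \<in> hom C (Cod C p) x \<and> Comp C u p = h \<and> Comp C u q = k))"

text \<open>E is the class of conflations, given as pairs (inflation, deflation).\<close>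
definition conflation_category :: "('o,'m,'x) addcat_scheme \<Rightarrow> ('m \<times> 'm) set \<Rightarrow> bool" where
  "conflation_category C E \<longleftrightarrow> additive C \<and>
     (\<forall>(f,g)\<in>E. kernel_cokernel_pair C f g) \<and>
     (\<forall>(f,g)\<in>E. \<forall>f' g' \<alpha> \<beta> \<gamma>.
        f' \<in> Mor C \<and> g' \<in> Mor C \<and> Cod C f' = Dom C g' \<and>
        iso C \<alpha> \<and> iso C \<beta> \<and> iso C \<gamma> \<and>
        \<alpha> \<in> hom C (Dom C f) (Dom C f') \<and> \<beta> \<in> hom C (Cod C f) (Cod C f') \<and>
        \<gamma> \<in> hom C (Cod C g) (Cod C g') \<and>
        Comp C \<beta> f = Comp C f' \<alpha> \<and> Comp C \<gamma> g = Comp C g' \<beta>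
        \<longrightarrow> (f',g') \<in> E)"

definition inflation :: "('m \<times> 'm) set \<Rightarrow> 'm \<Rightarrow> bool" where
  "inflation E f \<longleftrightarrow> (\<exists>g. (f,g) \<in> E)"

definition deflation :: "('m \<times> 'm) set \<Rightarrow> 'm \<Rightarrow> bool" where
  "deflation E g \<longleftrightarrow> (\<exists>f. (f,g) \<in> E)"

definition deflation_exact :: "('o,'m,'x) addcat_scheme \<Rightarrow> ('m \<times> 'm) set \<Rightarrow> bool" where
  "deflation_exact C E \<longleftrightarrow> conflation_category C E \<and>
     \<comment> \<open>R0\<close>
     (\<exists>z. zero_object C z \<and> deflation E (Id C z)) \<and>
     \<comment> \<open>R1\<close>
     (\<forall>d1 d2. deflation E d1 \<and> deflation E d2 \<and> Cod C d1 = Dom C d2 \<longrightarrow>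
        deflation E (Comp C d2 d1)) \<and>
     \<comment> \<open>R2\<close>
     (\<forall>d f. deflation E d \<and> f \<in> Mor C \<and> Cod C f = Cod C d \<longrightarrow>
        (\<exists>d' f'. is_pullback C f d d' f' \<and> deflation E d'))"

definition admissible :: "('o,'m,'x) addcat_scheme \<Rightarrow> ('m \<times> 'm) set \<Rightarrow> 'm set" where
  "admissible C E = {h. \<exists>d i. deflation E d \<and> inflation E i \<and> Cod C d = Dom C i \<and> h = Comp C i d}"

text \<open>A full subcategory is given by its set of objects.\<close>
definition adm_defl_percolating ::
  "('o,'m,'x) addcat_scheme \<Rightarrow> ('m \<times> 'm) set \<Rightarrow> 'o set \<Rightarrow> bool" where
  "adm_defl_percolating C E A \<longleftrightarrow> A \<subseteq> Obj C \<and> A \<noteq> {} \<and>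
     \<comment> \<open>A1\<close>
     (\<forall>(f,g)\<in>E. Cod C f \<in> A \<longleftrightarrow> (Dom C f \<in> A \<and> Cod C g \<in> A)) \<and>
     \<comment> \<open>A2\<close>
     (\<forall>h\<in>Mor C. Cod C h \<in> A \<longrightarrow>
        (\<exists>d i. deflation E d \<and> inflation E i \<and> Cod C d = Dom C i \<and> Cod C d \<in> A \<and>
               h = Comp C i d)) \<and>
     \<comment> \<open>A3\<close>
     (\<forall>a b. inflation E a \<and> deflation E b \<and> Dom C a = Dom C b \<and> Cod C b \<in> A \<longrightarrow>
        (\<exists>p q. is_pushout C a b p q \<and> deflation E p \<and> inflation E q))"

inductive_set weak_isos ::
  "('o,'m,'x) addcat_scheme \<Rightarrow> ('m \<times> 'm) set \<Rightarrow> 'o set \<Rightarrow> 'm set"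
  for C E A where
  infl: "(f,g) \<in> E \<Longrightarrow> Cod C g \<in> A \<Longrightarrow> f \<in> weak_isos C E A"
| defl: "(f,g) \<in> E \<Longrightarrow> Dom C f \<in> A \<Longrightarrow> g \<in> weak_isos C E A"
| comp: "s \<in> weak_isos C E A \<Longrightarrow> t \<in> weak_isos C E A \<Longrightarrow> Cod C s = Dom C t \<Longrightarrow>
         Comp C t s \<in> weak_isos C E A"

definition right_mult_system :: "('o,'m,'x) addcat_scheme \<Rightarrow> 'm set \<Rightarrow> bool" where
  "right_mult_system C S \<longleftrightarrow> S \<subseteq> Mor C \<and>
     \<comment> \<open>RMS1\<close>
     (\<forall>a\<in>Obj C. Id C a \<in> S) \<and>
     (\<forall>s\<in>S. \<forall>t\<in>S. Cod C s = Dom C t \<longrightarrow> Comp C t s \<in> S) \<and>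
     \<comment> \<open>RMS2\<close>
     (\<forall>f\<in>Mor C. \<forall>s\<in>S. Cod C f = Cod C s \<longrightarrow>
        (\<exists>t g. t \<in> S \<and> g \<in> Mor C \<and> Cod C t = Dom C f \<and> Cod C g = Dom C s \<and>
               Dom C t = Dom C g \<and> Comp C f t = Comp C s g)) \<and>
     \<comment> \<open>RMS3\<close>
     (\<forall>f\<in>Mor C. \<forall>g\<in>Mor C. \<forall>s\<in>S. Dom C f = Dom C g \<and> Cod C f = Cod C g \<and>
        Dom C s = Cod C f \<and> Comp C s f = Comp C s g \<longrightarrow>
        (\<exists>t\<in>S. Cod C t = Dom C f \<and> Comp C f t = Comp C g t))"

definition RMS2_pullback :: "('o,'m,'x) addcat_scheme \<Rightarrow> 'm set \<Rightarrow> bool" where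
  "RMS2_pullback C S \<longleftrightarrow>
     (\<forall>f\<in>Mor C. \<forall>s\<in>S. Cod C f = Cod C s \<longrightarrow>
        (\<exists>t g. t \<in> S \<and> is_pullback C f s t g))"

end

theory Submission
  imports Defs
begin


locale pc =
  fixes C :: "('o,'m,'x) addcat_scheme" and E :: "('m \<times> 'm) set" and A :: "'o set"
  assumes de: "deflation_exact C E" and perc: "adm_defl_percolating C E A"
begin

lemma cc: "conflation_category C E" using de unfolding deflation_exact_def by blast
lemma addi: "additive C" using cc unfolding conflation_category_def by blast
lemma pre: "preadditive C" using addi unfolding additive_def by blast
lemma cat: "category C" using pre unfolding preadditive_def by blast

lemma dom_obj[simp]: "f \<in> Mor C \<Longrightarrow> Dom C f \<in> Obj C"
  using cat unfolding category_def by blast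
lemma cod_obj[simp]: "f \<in> Mor C \<Longrightarrow> Cod C f \<in> Obj C"
  using cat unfolding category_def by blast
lemma id_mor[simp]: "a \<in> Obj C \<Longrightarrow> Id C a \<in> Mor C"
  using cat unfolding category_def hom_def by blast
lemma id_dom[simp]: "a \<in> Obj C \<Longrightarrow> Dom C (Id C a) = a"
  using cat unfolding category_def hom_def by blast
lemma id_cod[simp]: "a \<in> Obj C \<Longrightarrow> Cod C (Id C a) = a"
  using cat unfolding category_def hom_def by blast
lemma comp_mor[simp]: "f \<in> Mor C \<Longrightarrow> g \<in> Mor C \<Longrightarrow> Cod C f = Dom C g \<Longrightarrow> Comp C g f \<in> Mor C"
  using cat unfolding category_def hom_def by blast
lemma comp_dom[simp]: "f \<in> Mor C \<Longrightarrow> g \<in> Mor C \<Longrightarrow> Cod C f = Dom C g \<Longrightarrow> Dom C (Comp C g f) = Dom C f"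
  using cat unfolding category_def hom_def by blast
lemma comp_cod[simp]: "f \<in> Mor C \<Longrightarrow> g \<in> Mor C \<Longrightarrow> Cod C f = Dom C g \<Longrightarrow> Cod C (Comp C g f) = Cod C g"
  using cat unfolding category_def hom_def by blast
lemma id_l[simp]: "f \<in> Mor C \<Longrightarrow> Cod C f = b \<Longrightarrow> Comp C (Id C b) f = f"
  using cat unfolding category_def by blast
lemma id_r[simp]: "f \<in> Mor C \<Longrightarrow> Dom C f = b \<Longrightarrow> Comp C f (Id C b) = f"
  using cat unfolding category_def by blast
lemma assoc: "f \<in> Mor C \<Longrightarrow> g \<in> Mor C \<Longrightarrow> h \<in> Mor C \<Longrightarrow> Cod C f = Dom C g \<Longrightarrow> Cod C g = Dom C h \<Longrightarrow>
   Comp C (Comp C h g) f = Comp C h (Comp C g f)"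
  using cat unfolding category_def by metis

lemma homI: "f \<in> Mor C \<Longrightarrow> Dom C f = a \<Longrightarrow> Cod C f = b \<Longrightarrow> f \<in> hom C a b"
  unfolding hom_def by blast
lemma homD: "f \<in> hom C a b \<Longrightarrow> f \<in> Mor C \<and> Dom C f = a \<and> Cod C f = b"
  unfolding hom_def by blast
lemma hom_iff: "f \<in> hom C a b \<longleftrightarrow> f \<in> Mor C \<and> Dom C f = a \<and> Cod C f = b"
  unfolding hom_def by blast

lemma zm[simp]: "a \<in> Obj C \<Longrightarrow> b \<in> Obj C \<Longrightarrow> Zm C a b \<in> Mor C"
  and zm_dom[simp]: "a \<in> Obj C \<Longrightarrow> b \<in> Obj C \<Longrightarrow> Dom C (Zm C a b) = a"
  and zm_cod[simp]: "a \<in> Obj C \<Longrightarrow> b \<in> Obj C \<Longrightarrow> Cod C (Zm C a b) = b"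
  using pre unfolding preadditive_def hom_def by blast+


lemma pre_hom: "a \<in> Obj C \<Longrightarrow> b \<in> Obj C \<Longrightarrow> f\<in>hom C a b \<Longrightarrow> g\<in>hom C a b \<Longrightarrow> Add C f g \<in> hom C a b \<and> Add C f g = Add C g f"
  using pre unfolding preadditive_def by (meson)
lemma pre_assoc: "a \<in> Obj C \<Longrightarrow> b \<in> Obj C \<Longrightarrow> f\<in>hom C a b \<Longrightarrow> g\<in>hom C a b \<Longrightarrow> h\<in>hom C a b \<Longrightarrow> Add C (Add C f g) h = Add C f (Add C g h)"
  using pre unfolding preadditive_def by (meson)
lemma pre_zero: "a \<in> Obj C \<Longrightarrow> b \<in> Obj C \<Longrightarrow> f\<in>hom C a b \<Longrightarrow> Add C f (Zm C a b) = f"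
  using pre unfolding preadditive_def by (meson)
lemma pre_inv: "a \<in> Obj C \<Longrightarrow> b \<in> Obj C \<Longrightarrow> f\<in>hom C a b \<Longrightarrow> \<exists>g\<in>hom C a b. Add C f g = Zm C a b"
  using pre unfolding preadditive_def by (meson)
lemma pre_distl: "a \<in> Obj C \<Longrightarrow> b \<in> Obj C \<Longrightarrow> c \<in> Obj C \<Longrightarrow> f\<in>hom C a b \<Longrightarrow> g\<in>hom C a b \<Longrightarrow> h\<in>hom C b c \<Longrightarrow>
        Comp C h (Add C f g) = Add C (Comp C h f) (Comp C h g)"
  using pre unfolding preadditive_def by (meson)
lemma pre_distr: "a \<in> Obj C \<Longrightarrow> b \<in> Obj C \<Longrightarrow> c \<in> Obj C \<Longrightarrow> f\<in>hom C a b \<Longrightarrow> g\<in>hom C b c \<Longrightarrow> h\<in>hom C b c \<Longrightarrow>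
        Comp C (Add C g h) f = Add C (Comp C g f) (Comp C h f)"
  using pre unfolding preadditive_def by (meson)

lemma add_mor[simp]: "f \<in> Mor C \<Longrightarrow> g \<in> Mor C \<Longrightarrow> Dom C g = Dom C f \<Longrightarrow> Cod C g = Cod C f \<Longrightarrow> Add C f g \<in> Mor C"
  and add_dom[simp]: "f \<in> Mor C \<Longrightarrow> g \<in> Mor C \<Longrightarrow> Dom C g = Dom C f \<Longrightarrow> Cod C g = Cod C f \<Longrightarrow> Dom C (Add C f g) = Dom C f"
  and add_cod[simp]: "f \<in> Mor C \<Longrightarrow> g \<in> Mor C \<Longrightarrow> Dom C g = Dom C f \<Longrightarrow> Cod C g = Cod C f \<Longrightarrow> Cod C (Add C f g) = Cod C f"
  using pre_hom[of "Dom C f" "Cod C f" f g] by (auto simp: hom_def)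

lemma add_comm: "f \<in> Mor C \<Longrightarrow> g \<in> Mor C \<Longrightarrow> Dom C g = Dom C f \<Longrightarrow> Cod C g = Cod C f \<Longrightarrow> Add C f g = Add C g f"
  using pre_hom[of "Dom C f" "Cod C f" f g] by (auto simp: hom_def)

lemma add_assoc: "f \<in> Mor C \<Longrightarrow> g \<in> Mor C \<Longrightarrow> h \<in> Mor C \<Longrightarrow> Dom C g = Dom C f \<Longrightarrow> Cod C g = Cod C f \<Longrightarrow>
   Dom C h = Dom C f \<Longrightarrow> Cod C h = Cod C f \<Longrightarrow> Add C (Add C f g) h = Add C f (Add C g h)"
  using pre_assoc[of "Dom C f" "Cod C f" f g h] by (auto simp: hom_def)

lemma add_zero: "f \<in> Mor C \<Longrightarrow> Dom C f = a \<Longrightarrow> Cod C f = b \<Longrightarrow> Add C f (Zm C a b) = f"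
  using pre_zero[of a b f] by (auto simp: hom_def)

lemma add_inv: "f \<in> Mor C \<Longrightarrow> \<exists>g. g \<in> Mor C \<and> Dom C g = Dom C f \<and> Cod C g = Cod C f \<and> Add C f g = Zm C (Dom C f) (Cod C f)"
  using pre_inv[of "Dom C f" "Cod C f" f] by (auto simp: hom_def)

lemma distl: "f \<in> Mor C \<Longrightarrow> g \<in> Mor C \<Longrightarrow> h \<in> Mor C \<Longrightarrow> Dom C g = Dom C f \<Longrightarrow> Cod C g = Cod C f \<Longrightarrow>
   Dom C h = Cod C f \<Longrightarrow> Comp C h (Add C f g) = Add C (Comp C h f) (Comp C h g)"
  using pre_distl[of "Dom C f" "Cod C f" "Cod C h" f g h] by (auto simp: hom_def)

lemma distr: "f \<in> Mor C \<Longrightarrow> g \<in> Mor C \<Longrightarrow> h \<in> Mor C \<Longrightarrow> Dom C g = Dom C f \<Longrightarrow> Cod C g = Cod C f \<Longrightarrow>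
   Cod C h = Dom C f \<Longrightarrow> Comp C (Add C f g) h = Add C (Comp C f h) (Comp C g h)"
  using pre_distr[of "Dom C h" "Dom C f" "Cod C f" h f g] by (auto simp: hom_def)


lemma self_add_zero: "x \<in> Mor C \<Longrightarrow> Add C x x = x \<Longrightarrow> x = Zm C (Dom C x) (Cod C x)"
proof -
  assume x: "x \<in> Mor C" "Add C x x = x"
  obtain g where g: "g \<in> Mor C" "Dom C g = Dom C x" "Cod C g = Cod C x" "Add C x g = Zm C (Dom C x) (Cod C x)"
    using add_inv[OF x(1)] by blast
  have "x = Add C x (Zm C (Dom C x) (Cod C x))" using add_zero[of x] x by simp
  also have "\<dots> = Add C (Add C x x) g" using g x add_assoc[of x x g] by simp
  also have "\<dots> = Add C x g" using x by simp
  finally have "x = Add C x g" .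
  then show ?thesis using g by simp
qed

lemma zero_r[simp]: "h \<in> Mor C \<Longrightarrow> Dom C h = b \<Longrightarrow> a \<in> Obj C \<Longrightarrow> Comp C h (Zm C a b) = Zm C a (Cod C h)"
proof -
  assume h: "h \<in> Mor C" "Dom C h = b" "a \<in> Obj C"
  have b: "b \<in> Obj C" using h by auto
  let ?z = "Zm C a b"
  have zz: "Add C ?z ?z = ?z" using add_zero[of ?z a b] h b by simp
  have "Add C (Comp C h ?z) (Comp C h ?z) = Comp C h ?z"
    using distl[of ?z ?z h] zz h b by simp
  then show ?thesis using self_add_zero[of "Comp C h ?z"] h b by simp
qed

lemma zero_l[simp]: "f \<in> Mor C \<Longrightarrow> Cod C f = b \<Longrightarrow> c \<in> Obj C \<Longrightarrow> Comp C (Zm C b c) f = Zm C (Dom C f) c"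
proof -
  assume h: "f \<in> Mor C" "Cod C f = b" "c \<in> Obj C"
  have b: "b \<in> Obj C" using h by auto
  let ?z = "Zm C b c"
  have zz: "Add C ?z ?z = ?z" using add_zero[of ?z b c] h b by simp
  have "Add C (Comp C ?z f) (Comp C ?z f) = Comp C ?z f"
    using distr[of ?z ?z f] zz h b by simp
  then show ?thesis using self_add_zero[of "Comp C ?z f"] h b by simp
qed

definition neg where "neg f = (SOME g. g \<in> Mor C \<and> Dom C g = Dom C f \<and> Cod C g = Cod C f \<and> Add C f g = Zm C (Dom C f) (Cod C f))"

lemma neg: "f \<in> Mor C \<Longrightarrow> neg f \<in> Mor C \<and> Dom C (neg f) = Dom C f \<and> Cod C (neg f) = Cod C f \<and> Add C f (neg f) = Zm C (Dom C f) (Cod C f)"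
  unfolding neg_def by (rule someI_ex, rule add_inv)

lemma neg_mor[simp]: "f \<in> Mor C \<Longrightarrow> neg f \<in> Mor C" using neg by blast
lemma neg_dom[simp]: "f \<in> Mor C \<Longrightarrow> Dom C (neg f) = Dom C f" using neg by blast
lemma neg_cod[simp]: "f \<in> Mor C \<Longrightarrow> Cod C (neg f) = Cod C f" using neg by blast
lemma add_neg[simp]: "f \<in> Mor C \<Longrightarrow> Add C f (neg f) = Zm C (Dom C f) (Cod C f)" using neg by blast

lemma zero_add: "f \<in> Mor C \<Longrightarrow> Dom C f = a \<Longrightarrow> Cod C f = b \<Longrightarrow> Add C (Zm C a b) f = f"
  using add_comm[of f "Zm C a b"] add_zero[of f a b] by auto

lemma inv_unique: "x \<in> Mor C \<Longrightarrow> y \<in> Mor C \<Longrightarrow> y' \<in> Mor C \<Longrightarrow> Dom C y = Dom C x \<Longrightarrow> Cod C y = Cod C x \<Longrightarrow>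
  Dom C y' = Dom C x \<Longrightarrow> Cod C y' = Cod C x \<Longrightarrow> Add C x y = Zm C (Dom C x) (Cod C x) \<Longrightarrow> Add C x y' = Zm C (Dom C x) (Cod C x) \<Longrightarrow> y = y'"
proof -
  assume a: "x \<in> Mor C" "y \<in> Mor C" "y' \<in> Mor C" "Dom C y = Dom C x" "Cod C y = Cod C x"
  "Dom C y' = Dom C x" "Cod C y' = Cod C x" "Add C x y = Zm C (Dom C x) (Cod C x)" "Add C x y' = Zm C (Dom C x) (Cod C x)"
  have "y = Add C y (Add C x y')" using a add_zero[of y] by simp
  also have "\<dots> = Add C (Add C y x) y'" using a add_assoc[of y x y'] by simp
  also have "\<dots> = Add C (Add C x y) y'" using a add_comm[of y x] by simp
  also have "\<dots> = y'" using a zero_add by simp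
  finally show ?thesis .
qed

lemma sub_zero_eq: "f \<in> Mor C \<Longrightarrow> g \<in> Mor C \<Longrightarrow> Dom C g = Dom C f \<Longrightarrow> Cod C g = Cod C f \<Longrightarrow>
   Add C f (neg g) = Zm C (Dom C f) (Cod C f) \<Longrightarrow> f = g"
proof -
  assume a: "f \<in> Mor C" "g \<in> Mor C" "Dom C g = Dom C f" "Cod C g = Cod C f" "Add C f (neg g) = Zm C (Dom C f) (Cod C f)"
  have "Add C (neg g) f = Zm C (Dom C g) (Cod C g)" using a add_comm[of f "neg g"] by simp
  moreover have "Add C (neg g) g = Zm C (Dom C g) (Cod C g)" using a add_comm[of g "neg g"] by simp
  ultimately show ?thesis using inv_unique[of "neg g" f g] a by simp
qed

lemma comp_neg_l: "g \<in> Mor C \<Longrightarrow> h \<in> Mor C \<Longrightarrow> Dom C h = Cod C g \<Longrightarrow> Comp C h (neg g) = neg (Comp C h g)"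
proof -
  assume a: "g \<in> Mor C" "h \<in> Mor C" "Dom C h = Cod C g"
  have "Add C (Comp C h g) (Comp C h (neg g)) = Zm C (Dom C g) (Cod C h)"
    using distl[of g "neg g" h] a by simp
  then show ?thesis using inv_unique[of "Comp C h g" "Comp C h (neg g)" "neg (Comp C h g)"] a by simp
qed

lemma comp_neg_r: "g \<in> Mor C \<Longrightarrow> h \<in> Mor C \<Longrightarrow> Cod C h = Dom C g \<Longrightarrow> Comp C (neg g) h = neg (Comp C g h)"
proof -
  assume a: "g \<in> Mor C" "h \<in> Mor C" "Cod C h = Dom C g"
  have "Add C (Comp C g h) (Comp C (neg g) h) = Zm C (Dom C h) (Cod C g)"
    using distr[of g "neg g" h] a by simp
  then show ?thesis using inv_unique[of "Comp C g h" "Comp C (neg g) h" "neg (Comp C g h)"] a by simp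
qed

lemma neg_zero[simp]: "a \<in> Obj C \<Longrightarrow> b \<in> Obj C \<Longrightarrow> neg (Zm C a b) = Zm C a b"
  using inv_unique[of "Zm C a b" "Zm C a b" "neg (Zm C a b)"] add_zero[of "Zm C a b" a b] by simp

lemma comp_sub_l: "f \<in> Mor C \<Longrightarrow> g \<in> Mor C \<Longrightarrow> h \<in> Mor C \<Longrightarrow> Dom C g = Dom C f \<Longrightarrow> Cod C g = Cod C f \<Longrightarrow>
   Dom C h = Cod C f \<Longrightarrow> Comp C h (Add C f (neg g)) = Add C (Comp C h f) (neg (Comp C h g))"
  using distl[of f "neg g" h] comp_neg_l[of g h] by simp

lemma comp_sub_r: "f \<in> Mor C \<Longrightarrow> g \<in> Mor C \<Longrightarrow> h \<in> Mor C \<Longrightarrow> Dom C g = Dom C f \<Longrightarrow> Cod C g = Cod C f \<Longrightarrow>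
   Cod C h = Dom C f \<Longrightarrow> Comp C (Add C f (neg g)) h = Add C (Comp C f h) (neg (Comp C g h))"
  using distr[of f "neg g" h] comp_neg_r[of g h] by simp

end


context pc begin

lemma conf: "(f,g) \<in> E \<Longrightarrow> is_kernel C f g \<and> is_cokernel C g f"
  using cc unfolding conflation_category_def kernel_cokernel_pair_def by blast

lemma ker_basic: "is_kernel C f g \<Longrightarrow> f \<in> Mor C \<and> g \<in> Mor C \<and> Cod C f = Dom C g \<and> Comp C g f = Zm C (Dom C f) (Cod C g)"
  unfolding is_kernel_def by blast

lemma coker_basic: "is_cokernel C g f \<Longrightarrow> f \<in> Mor C \<and> g \<in> Mor C \<and> Cod C f = Dom C g \<and> Comp C g f = Zm C (Dom C f) (Cod C g)"
  unfolding is_cokernel_def by blast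

lemma E_basic: "(f,g) \<in> E \<Longrightarrow> f \<in> Mor C \<and> g \<in> Mor C \<and> Cod C f = Dom C g \<and> Comp C g f = Zm C (Dom C f) (Cod C g)"
  using conf ker_basic by blast

lemma ker_factor: "is_kernel C f g \<Longrightarrow> h \<in> Mor C \<Longrightarrow> Cod C h = Dom C g \<Longrightarrow> Comp C g h = Zm C (Dom C h) (Cod C g) \<Longrightarrow>
   \<exists>u. u \<in> Mor C \<and> Dom C u = Dom C h \<and> Cod C u = Dom C f \<and> Comp C f u = h"
  unfolding is_kernel_def hom_def by (metis (mono_tags, lifting) dom_obj mem_Collect_eq)

lemma ker_mono: "is_kernel C f g \<Longrightarrow> u1 \<in> Mor C \<Longrightarrow> u2 \<in> Mor C \<Longrightarrow> Cod C u1 = Dom C f \<Longrightarrow> Cod C u2 = Dom C f \<Longrightarrow>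
   Dom C u2 = Dom C u1 \<Longrightarrow> Comp C f u1 = Comp C f u2 \<Longrightarrow> u1 = u2"
proof -
  assume a: "is_kernel C f g" "u1 \<in> Mor C" "u2 \<in> Mor C" "Cod C u1 = Dom C f" "Cod C u2 = Dom C f"
   "Dom C u2 = Dom C u1" "Comp C f u1 = Comp C f u2"
  have b: "f \<in> Mor C" "g \<in> Mor C" "Cod C f = Dom C g" "Comp C g f = Zm C (Dom C f) (Cod C g)" using a ker_basic by blast+
  let ?h = "Comp C f u1"
  have h: "?h \<in> hom C (Dom C u1) (Dom C g)" using a b by (auto simp: hom_def)
  have "Comp C g ?h = Zm C (Dom C u1) (Cod C g)" using a b assoc[of u1 f g] by simp
  then have "\<exists>!u. u \<in> hom C (Dom C u1) (Dom C f) \<and> Comp C f u = ?h"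
    using a(1) h a(2) unfolding is_kernel_def by auto
  then show ?thesis using a by (auto simp: hom_def)
qed

lemma ker_mono0: "is_kernel C f g \<Longrightarrow> u \<in> Mor C \<Longrightarrow> Cod C u = Dom C f \<Longrightarrow> Comp C f u = Zm C (Dom C u) (Cod C f) \<Longrightarrow> u = Zm C (Dom C u) (Dom C f)"
  using ker_mono[of f g u "Zm C (Dom C u) (Dom C f)"] ker_basic[of f g] by simp

lemma coker_factor: "is_cokernel C g f \<Longrightarrow> h \<in> Mor C \<Longrightarrow> Dom C h = Cod C f \<Longrightarrow> Comp C h f = Zm C (Dom C f) (Cod C h) \<Longrightarrow>
   \<exists>u. u \<in> Mor C \<and> Dom C u = Cod C g \<and> Cod C u = Cod C h \<and> Comp C u g = h"
  unfolding is_cokernel_def hom_def by (metis (mono_tags, lifting) cod_obj mem_Collect_eq)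

lemma coker_epi: "is_cokernel C g f \<Longrightarrow> u1 \<in> Mor C \<Longrightarrow> u2 \<in> Mor C \<Longrightarrow> Dom C u1 = Cod C g \<Longrightarrow> Dom C u2 = Cod C g \<Longrightarrow>
   Cod C u2 = Cod C u1 \<Longrightarrow> Comp C u1 g = Comp C u2 g \<Longrightarrow> u1 = u2"
proof -
  assume a: "is_cokernel C g f" "u1 \<in> Mor C" "u2 \<in> Mor C" "Dom C u1 = Cod C g" "Dom C u2 = Cod C g"
   "Cod C u2 = Cod C u1" "Comp C u1 g = Comp C u2 g"
  have b: "f \<in> Mor C" "g \<in> Mor C" "Cod C f = Dom C g" "Comp C g f = Zm C (Dom C f) (Cod C g)" using a coker_basic by blast+
  let ?h = "Comp C u1 g"
  have h: "?h \<in> hom C (Cod C f) (Cod C u1)" using a b by (auto simp: hom_def)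
  have "Comp C ?h f = Zm C (Dom C f) (Cod C u1)" using a b assoc[of f g u1] by simp
  then have "\<exists>!u. u \<in> hom C (Cod C g) (Cod C u1) \<and> Comp C u g = ?h"
    using a(1) h a(2) unfolding is_cokernel_def by auto
  then show ?thesis using a by (auto simp: hom_def)
qed

definition inv_pair where "inv_pair a a' \<longleftrightarrow> a \<in> Mor C \<and> a' \<in> Mor C \<and> Dom C a' = Cod C a \<and> Cod C a' = Dom C a \<and>
  Comp C a' a = Id C (Dom C a) \<and> Comp C a a' = Id C (Cod C a)"

lemma inv_pair_sym: "inv_pair a a' \<Longrightarrow> inv_pair a' a" unfolding inv_pair_def by auto

lemma inv_pair_iso: "inv_pair a a' \<Longrightarrow> iso C a" unfolding inv_pair_def iso_def hom_def by auto

lemma E_iso: "(f,g) \<in> E \<Longrightarrow> f' \<in> Mor C \<Longrightarrow> g' \<in> Mor C \<Longrightarrow> Cod C f' = Dom C g' \<Longrightarrow>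
  inv_pair \<alpha> \<alpha>' \<Longrightarrow> inv_pair \<beta> \<beta>' \<Longrightarrow> inv_pair \<gamma> \<gamma>' \<Longrightarrow>
  \<alpha> \<in> hom C (Dom C f) (Dom C f') \<Longrightarrow> \<beta> \<in> hom C (Cod C f) (Cod C f') \<Longrightarrow> \<gamma> \<in> hom C (Cod C g) (Cod C g') \<Longrightarrow>
  Comp C \<beta> f = Comp C f' \<alpha> \<Longrightarrow> Comp C \<gamma> g = Comp C g' \<beta> \<Longrightarrow> (f',g') \<in> E"
  using cc inv_pair_iso unfolding conflation_category_def by blast

lemma id_pair[simp]: "a \<in> Obj C \<Longrightarrow> inv_pair (Id C a) (Id C a)" unfolding inv_pair_def by simp

lemma E_dom: "(f,g) \<in> E \<Longrightarrow> inv_pair \<alpha> \<alpha>' \<Longrightarrow> Cod C \<alpha> = Dom C f \<Longrightarrow> (Comp C f \<alpha>, g) \<in> E"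
proof -
  assume a: "(f,g) \<in> E" "inv_pair \<alpha> \<alpha>'" "Cod C \<alpha> = Dom C f"
  note b = E_basic[OF a(1)]
  have c: "\<alpha> \<in> Mor C" "\<alpha>' \<in> Mor C" "Dom C \<alpha>' = Cod C \<alpha>" "Cod C \<alpha>' = Dom C \<alpha>" "Comp C \<alpha>' \<alpha> = Id C (Dom C \<alpha>)"
    "Comp C \<alpha> \<alpha>' = Id C (Cod C \<alpha>)" using a(2) unfolding inv_pair_def by auto
  show ?thesis
  proof (rule E_iso[OF a(1), of _ _ \<alpha>' \<alpha> "Id C (Cod C f)" "Id C (Cod C f)" "Id C (Cod C g)" "Id C (Cod C g)"])
    show "Comp C (Id C (Cod C f)) f = Comp C (Comp C f \<alpha>) \<alpha>'"
      using a b c assoc[of \<alpha>' \<alpha> f] by simp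
  qed (use a b c in \<open>auto simp: hom_def inv_pair_def\<close>)
qed

lemma E_cod: "(f,g) \<in> E \<Longrightarrow> inv_pair \<gamma> \<gamma>' \<Longrightarrow> Dom C \<gamma> = Cod C g \<Longrightarrow> (f, Comp C \<gamma> g) \<in> E"
proof -
  assume a: "(f,g) \<in> E" "inv_pair \<gamma> \<gamma>'" "Dom C \<gamma> = Cod C g"
  note b = E_basic[OF a(1)]
  have c: "\<gamma> \<in> Mor C" "\<gamma>' \<in> Mor C" "Dom C \<gamma>' = Cod C \<gamma>" "Cod C \<gamma>' = Dom C \<gamma>" using a(2) unfolding inv_pair_def by auto
  show ?thesis
    by (rule E_iso[OF a(1), of _ _ "Id C (Dom C f)" "Id C (Dom C f)" "Id C (Cod C f)" "Id C (Cod C f)" \<gamma> \<gamma>'])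
      (use a b c in \<open>auto simp: hom_def\<close>)
qed

lemma E_mid: "(f,g) \<in> E \<Longrightarrow> inv_pair \<beta> \<beta>' \<Longrightarrow> Dom C \<beta> = Cod C f \<Longrightarrow> (Comp C \<beta> f, Comp C g \<beta>') \<in> E"
proof -
  assume a: "(f,g) \<in> E" "inv_pair \<beta> \<beta>'" "Dom C \<beta> = Cod C f"
  note b = E_basic[OF a(1)]
  have c: "\<beta> \<in> Mor C" "\<beta>' \<in> Mor C" "Dom C \<beta>' = Cod C \<beta>" "Cod C \<beta>' = Dom C \<beta>" "Comp C \<beta>' \<beta> = Id C (Dom C \<beta>)"
    "Comp C \<beta> \<beta>' = Id C (Cod C \<beta>)" using a(2) unfolding inv_pair_def by auto
  show ?thesis
  proof (rule E_iso[OF a(1), of _ _ "Id C (Dom C f)" "Id C (Dom C f)" \<beta> \<beta>' "Id C (Cod C g)" "Id C (Cod C g)"])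
    show "Comp C (Id C (Cod C g)) g = Comp C (Comp C g \<beta>') \<beta>"
      using a b c assoc[of \<beta> \<beta>' g] by simp
  qed (use a b c in \<open>auto simp: hom_def\<close>)
qed

lemma kers_iso: "is_kernel C f g \<Longrightarrow> is_kernel C f' g \<Longrightarrow>
  \<exists>\<alpha> \<alpha>'. inv_pair \<alpha> \<alpha>' \<and> Dom C \<alpha> = Dom C f' \<and> Cod C \<alpha> = Dom C f \<and> f' = Comp C f \<alpha>"
proof -
  assume a: "is_kernel C f g" "is_kernel C f' g"
  note b = ker_basic[OF a(1)] and b' = ker_basic[OF a(2)]
  obtain \<alpha> where al: "\<alpha> \<in> Mor C" "Dom C \<alpha> = Dom C f'" "Cod C \<alpha> = Dom C f" "Comp C f \<alpha> = f'"
    using ker_factor[OF a(1), of f'] b b' by auto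
  obtain \<alpha>' where al': "\<alpha>' \<in> Mor C" "Dom C \<alpha>' = Dom C f" "Cod C \<alpha>' = Dom C f'" "Comp C f' \<alpha>' = f"
    using ker_factor[OF a(2), of f] b b' by auto
  have "Comp C \<alpha>' \<alpha> = Id C (Dom C \<alpha>)"
    by (rule ker_mono[OF a(2)]) (use al al' b b' assoc[of \<alpha> \<alpha>' f'] in auto)
  moreover have "Comp C \<alpha> \<alpha>' = Id C (Cod C \<alpha>)"
    by (rule ker_mono[OF a(1)]) (use al al' b b' assoc[of \<alpha>' \<alpha> f] in auto)
  ultimately have "inv_pair \<alpha> \<alpha>'" using al al' unfolding inv_pair_def by auto
  then show ?thesis using al by auto
qed

lemma cokers_iso: "is_cokernel C g f \<Longrightarrow> is_cokernel C g' f \<Longrightarrow>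
  \<exists>\<gamma> \<gamma>'. inv_pair \<gamma> \<gamma>' \<and> Dom C \<gamma> = Cod C g \<and> Cod C \<gamma> = Cod C g' \<and> g' = Comp C \<gamma> g"
proof -
  assume a: "is_cokernel C g f" "is_cokernel C g' f"
  note b = coker_basic[OF a(1)] and b' = coker_basic[OF a(2)]
  obtain \<gamma> where al: "\<gamma> \<in> Mor C" "Dom C \<gamma> = Cod C g" "Cod C \<gamma> = Cod C g'" "Comp C \<gamma> g = g'"
    using coker_factor[OF a(1), of g'] b b' by auto
  obtain \<gamma>' where al': "\<gamma>' \<in> Mor C" "Dom C \<gamma>' = Cod C g'" "Cod C \<gamma>' = Cod C g" "Comp C \<gamma>' g' = g"
    using coker_factor[OF a(2), of g] b b' by auto
  have "Comp C \<gamma>' \<gamma> = Id C (Dom C \<gamma>)"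
    by (rule coker_epi[OF a(1)]) (use al al' b b' assoc[of g \<gamma> \<gamma>'] in auto)
  moreover have "Comp C \<gamma> \<gamma>' = Id C (Cod C \<gamma>)"
    by (rule coker_epi[OF a(2)]) (use al al' b b' assoc[of g' \<gamma>' \<gamma>] in auto)
  ultimately have "inv_pair \<gamma> \<gamma>'" using al al' unfolding inv_pair_def by auto
  then show ?thesis using al by auto
qed

lemma ker_E: "(f,g) \<in> E \<Longrightarrow> is_kernel C f' g \<Longrightarrow> (f',g) \<in> E"
  using kers_iso[of f g f'] conf E_dom by metis

lemma coker_E: "(f,g) \<in> E \<Longrightarrow> is_cokernel C g' f \<Longrightarrow> (f,g') \<in> E"
  using cokers_iso[of g f g'] conf E_cod by metis

end


context pc begin

lemma A_obj: "a \<in> A \<Longrightarrow> a \<in> Obj C" using perc unfolding adm_defl_percolating_def by blast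
lemma A_ne: "\<exists>a. a \<in> A" using perc unfolding adm_defl_percolating_def by blast
lemma A1: "(f,g) \<in> E \<Longrightarrow> (Cod C f \<in> A \<longleftrightarrow> (Dom C f \<in> A \<and> Cod C g \<in> A))"
  using perc unfolding adm_defl_percolating_def by blast
lemma A2raw: "h \<in> Mor C \<Longrightarrow> Cod C h \<in> A \<Longrightarrow> (\<exists>d i. deflation E d \<and> inflation E i \<and> Cod C d = Dom C i \<and> Cod C d \<in> A \<and>
               h = Comp C i d)"
  using perc unfolding adm_defl_percolating_def by blast
lemma A3raw: "inflation E a \<Longrightarrow> deflation E b \<Longrightarrow> Dom C a = Dom C b \<Longrightarrow> Cod C b \<in> A \<Longrightarrow>
        (\<exists>p q. is_pushout C a b p q \<and> deflation E p \<and> inflation E q)"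
  using perc unfolding adm_defl_percolating_def by blast
lemma R0: "\<exists>z. zero_object C z \<and> deflation E (Id C z)"
  using de unfolding deflation_exact_def by blast
lemma R1: "deflation E d1 \<Longrightarrow> deflation E d2 \<Longrightarrow> Cod C d1 = Dom C d2 \<Longrightarrow> deflation E (Comp C d2 d1)"
  using de unfolding deflation_exact_def by blast
lemma R2: "deflation E d \<Longrightarrow> f \<in> Mor C \<Longrightarrow> Cod C f = Cod C d \<Longrightarrow> \<exists>d' f'. is_pullback C f d d' f' \<and> deflation E d'"
  using de unfolding deflation_exact_def by blast

lemma A_obj'[simp]: "a \<in> A \<Longrightarrow> a \<in> Obj C" by (rule A_obj)

lemma A2: "h \<in> Mor C \<Longrightarrow> Cod C h \<in> A \<Longrightarrow> \<exists>k e j p. (k,e) \<in> E \<and> (j,p) \<in> E \<and> Cod C e = Dom C j \<and> Cod C e \<in> A \<and>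
   Dom C e = Dom C h \<and> Cod C j = Cod C h \<and> h = Comp C j e"
proof -
  assume a: "h \<in> Mor C" "Cod C h \<in> A"
  then obtain d i where di: "deflation E d" "inflation E i" "Cod C d = Dom C i" "Cod C d \<in> A" "h = Comp C i d"
    using A2raw by blast
  obtain k j where "(k,d) \<in> E" "(i,j) \<in> E" using di unfolding deflation_def inflation_def by blast
  moreover then have "Dom C d = Dom C h" "Cod C i = Cod C h" using di E_basic by auto
  ultimately show ?thesis using di by blast
qed

lemma pb_basic: "is_pullback C f s t g \<Longrightarrow> f \<in> Mor C \<and> s \<in> Mor C \<and> t \<in> Mor C \<and> g \<in> Mor C \<and>
     Cod C f = Cod C s \<and> Cod C t = Dom C f \<and> Cod C g = Dom C s \<and> Dom C t = Dom C g \<and>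
     Comp C f t = Comp C s g" unfolding is_pullback_def by blast

lemma pb_univ: "is_pullback C f s t g \<Longrightarrow> h \<in> Mor C \<Longrightarrow> k \<in> Mor C \<Longrightarrow> Dom C k = Dom C h \<Longrightarrow> Cod C h = Dom C f \<Longrightarrow>
  Cod C k = Dom C s \<Longrightarrow> Comp C f h = Comp C s k \<Longrightarrow>
  \<exists>u. u \<in> Mor C \<and> Dom C u = Dom C h \<and> Cod C u = Dom C t \<and> Comp C t u = h \<and> Comp C g u = k"
proof -
  assume a: "is_pullback C f s t g" "h \<in> Mor C" "k \<in> Mor C" "Dom C k = Dom C h" "Cod C h = Dom C f"
    "Cod C k = Dom C s" "Comp C f h = Comp C s k"
  have all: "\<forall>x\<in>Obj C. \<forall>h\<in>hom C x (Dom C f). \<forall>k\<in>hom C x (Dom C s).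
        Comp C f h = Comp C s k \<longrightarrow> (\<exists>!u. u \<in> hom C x (Dom C t) \<and> Comp C t u = h \<and> Comp C g u = k)"
    using a(1) unfolding is_pullback_def by blast
  have "h \<in> hom C (Dom C h) (Dom C f)" "k \<in> hom C (Dom C h) (Dom C s)" using a by (auto simp: hom_def)
  then have "\<exists>!u. u \<in> hom C (Dom C h) (Dom C t) \<and> Comp C t u = h \<and> Comp C g u = k"
    using all dom_obj[OF a(2)] a(7) by blast
  then show ?thesis unfolding hom_def by blast
qed

lemma pb_uniq: "is_pullback C f s t g \<Longrightarrow> u1 \<in> Mor C \<Longrightarrow> u2 \<in> Mor C \<Longrightarrow> Dom C u2 = Dom C u1 \<Longrightarrow>
  Cod C u1 = Dom C t \<Longrightarrow> Cod C u2 = Dom C t \<Longrightarrow> Comp C t u1 = Comp C t u2 \<Longrightarrow> Comp C g u1 = Comp C g u2 \<Longrightarrow> u1 = u2"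
proof -
  assume a: "is_pullback C f s t g" "u1 \<in> Mor C" "u2 \<in> Mor C" "Dom C u2 = Dom C u1"
    "Cod C u1 = Dom C t" "Cod C u2 = Dom C t" "Comp C t u1 = Comp C t u2" "Comp C g u1 = Comp C g u2"
  note b = pb_basic[OF a(1)]
  have "Comp C f (Comp C t u1) = Comp C s (Comp C g u1)" using a b assoc[of u1 t f] assoc[of u1 g s] by simp
  moreover have "Comp C t u1 \<in> hom C (Dom C u1) (Dom C f)" "Comp C g u1 \<in> hom C (Dom C u1) (Dom C s)"
    using a b by (auto simp: hom_def)
  moreover have all: "\<forall>x\<in>Obj C. \<forall>h\<in>hom C x (Dom C f). \<forall>k\<in>hom C x (Dom C s).
        Comp C f h = Comp C s k \<longrightarrow> (\<exists>!u. u \<in> hom C x (Dom C t) \<and> Comp C t u = h \<and> Comp C g u = k)"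
    using a(1) unfolding is_pullback_def by blast
  ultimately have ex: "\<exists>!u. u \<in> hom C (Dom C u1) (Dom C t) \<and> Comp C t u = Comp C t u1 \<and> Comp C g u = Comp C g u1"
    using dom_obj[OF a(2)] by blast
  have "u1 \<in> hom C (Dom C u1) (Dom C t)" "u2 \<in> hom C (Dom C u1) (Dom C t)" using a by (auto simp: hom_def)
  then show ?thesis using ex a(7,8) by (metis (no_types, lifting))
qed

lemma po_basic: "is_pushout C a b p q \<Longrightarrow> a \<in> Mor C \<and> b \<in> Mor C \<and> p \<in> Mor C \<and> q \<in> Mor C \<and>
     Dom C a = Dom C b \<and> Dom C p = Cod C a \<and> Dom C q = Cod C b \<and> Cod C p = Cod C q \<and>
     Comp C p a = Comp C q b" unfolding is_pushout_def by blast

lemma po_univ: "is_pushout C a b p q \<Longrightarrow> h \<in> Mor C \<Longrightarrow> k \<in> Mor C \<Longrightarrow> Cod C k = Cod C h \<Longrightarrow> Dom C h = Cod C a \<Longrightarrow>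
  Dom C k = Cod C b \<Longrightarrow> Comp C h a = Comp C k b \<Longrightarrow>
  \<exists>u. u \<in> Mor C \<and> Dom C u = Cod C p \<and> Cod C u = Cod C h \<and> Comp C u p = h \<and> Comp C u q = k"
proof -
  assume a: "is_pushout C a b p q" "h \<in> Mor C" "k \<in> Mor C" "Cod C k = Cod C h" "Dom C h = Cod C a"
    "Dom C k = Cod C b" "Comp C h a = Comp C k b"
  have all: "\<forall>x\<in>Obj C. \<forall>h\<in>hom C (Cod C a) x. \<forall>k\<in>hom C (Cod C b) x.
        Comp C h a = Comp C k b \<longrightarrow> (\<exists>!u. u \<in> hom C (Cod C p) x \<and> Comp C u p = h \<and> Comp C u q = k)"
    using a(1) unfolding is_pushout_def by blast
  have "h \<in> hom C (Cod C a) (Cod C h)" "k \<in> hom C (Cod C b) (Cod C h)" using a by (auto simp: hom_def)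
  then have "\<exists>!u. u \<in> hom C (Cod C p) (Cod C h) \<and> Comp C u p = h \<and> Comp C u q = k"
    using all cod_obj[OF a(2)] a(7) by blast
  then show ?thesis unfolding hom_def by blast
qed

lemma po_uniq: "is_pushout C a b p q \<Longrightarrow> u1 \<in> Mor C \<Longrightarrow> u2 \<in> Mor C \<Longrightarrow> Cod C u2 = Cod C u1 \<Longrightarrow>
  Dom C u1 = Cod C p \<Longrightarrow> Dom C u2 = Cod C p \<Longrightarrow> Comp C u1 p = Comp C u2 p \<Longrightarrow> Comp C u1 q = Comp C u2 q \<Longrightarrow> u1 = u2"
proof -
  assume a: "is_pushout C a b p q" "u1 \<in> Mor C" "u2 \<in> Mor C" "Cod C u2 = Cod C u1"
    "Dom C u1 = Cod C p" "Dom C u2 = Cod C p" "Comp C u1 p = Comp C u2 p" "Comp C u1 q = Comp C u2 q"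
  note b = po_basic[OF a(1)]
  have "Comp C (Comp C u1 p) a = Comp C (Comp C u1 q) b" using a b assoc[of a p u1] assoc[of b q u1] by simp
  moreover have "Comp C u1 p \<in> hom C (Cod C a) (Cod C u1)" "Comp C u1 q \<in> hom C (Cod C b) (Cod C u1)"
    using a b by (auto simp: hom_def)
  moreover have all: "\<forall>x\<in>Obj C. \<forall>h\<in>hom C (Cod C a) x. \<forall>k\<in>hom C (Cod C b) x.
        Comp C h a = Comp C k b \<longrightarrow> (\<exists>!u. u \<in> hom C (Cod C p) x \<and> Comp C u p = h \<and> Comp C u q = k)"
    using a(1) unfolding is_pushout_def by blast
  ultimately have ex: "\<exists>!u. u \<in> hom C (Cod C p) (Cod C u1) \<and> Comp C u p = Comp C u1 p \<and> Comp C u q = Comp C u1 q"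
    using cod_obj[OF a(2)] by blast
  have "u1 \<in> hom C (Cod C p) (Cod C u1)" "u2 \<in> hom C (Cod C p) (Cod C u1)" using a by (auto simp: hom_def)
  then show ?thesis using ex a(7,8) by (metis (no_types, lifting))
qed

lemma zero_pair: "a \<in> Obj C \<Longrightarrow> b \<in> Obj C \<Longrightarrow> Id C a = Zm C a a \<Longrightarrow> Id C b = Zm C b b \<Longrightarrow> inv_pair (Zm C a b) (Zm C b a)"
  unfolding inv_pair_def by simp

lemma id_infl: "Y \<in> Obj C \<Longrightarrow> \<exists>p z. (Id C Y, p) \<in> E \<and> z \<in> A \<and> Cod C p = z \<and> Id C z = Zm C z z"
proof -
  assume Y: "Y \<in> Obj C"
  obtain a where a: "a \<in> A" using A_ne by blast
  obtain k e j p where kejp: "(k,e) \<in> E" "(j,p) \<in> E" "Cod C e = Dom C j" "Cod C e \<in> A"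
   "Dom C e = Y" "Cod C j = a" "Zm C Y a = Comp C j e"
    using A2[of "Zm C Y a"] Y a by auto
  note ke = E_basic[OF kejp(1)] and jp = E_basic[OF kejp(2)]
  obtain z where z_def: "Cod C e = z" by blast
  have z: "z \<in> A" "z \<in> Obj C" using kejp z_def by auto
  have e0: "e = Zm C Y z"
    by (rule ker_mono[OF conf[OF kejp(2), THEN conjunct1]]) (use kejp ke jp z_def Y in auto)
  have idz: "Id C z = Zm C z z"
    by (rule coker_epi[OF conf[OF kejp(1), THEN conjunct2]]) (use kejp ke jp z_def Y e0 in auto)
  obtain u where u: "u \<in> Mor C" "Dom C u = Y" "Cod C u = Dom C k" "Comp C k u = Id C Y"
    using ker_factor[OF conf[OF kejp(1), THEN conjunct1], of "Id C Y"] Y ke kejp e0 z_def by auto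
  have "Comp C u k = Id C (Dom C k)"
    by (rule ker_mono[OF conf[OF kejp(1), THEN conjunct1]]) (use u ke kejp assoc[of k u k] in auto)
  then have "inv_pair u k" using u ke kejp unfolding inv_pair_def by auto
  then have "(Comp C k u, e) \<in> E" using E_dom[OF kejp(1)] u by blast
  then show ?thesis using u z z_def idz by auto
qed

lemma zeroA: "\<exists>z. z \<in> A \<and> Id C z = Zm C z z"
  using id_infl A_ne A_obj by blast

lemma id_defl: "Y \<in> Obj C \<Longrightarrow> \<exists>k. (k, Id C Y) \<in> E \<and> Dom C k \<in> A"
proof -
  assume Y: "Y \<in> Obj C"
  obtain z where z: "zero_object C z" "deflation E (Id C z)" using R0 by blast
  have zo: "z \<in> Obj C" using z unfolding zero_object_def by blast
  obtain d' f' where pb: "is_pullback C (Zm C Y z) (Id C z) d' f'" "deflation E d'"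
    using R2[OF z(2), of "Zm C Y z"] Y zo by auto
  note b0 = pb_basic[OF pb(1)]
  obtain P where P: "Dom C d' = P" "Dom C f' = P" using b0 by auto
  have b: "d' \<in> Mor C" "f' \<in> Mor C" "Cod C d' = Y" "Cod C f' = z" "Dom C d' = P" "Dom C f' = P"
     "Comp C (Zm C Y z) d' = Comp C (Id C z) f'" using b0 Y zo P by auto
  have f'0: "f' = Zm C P z"
  proof -
    have "f' = Comp C (Id C z) f'" using b zo by simp
    also have "\<dots> = Comp C (Zm C Y z) d'" using b zo by simp
    also have "\<dots> = Zm C P z" by (rule trans[OF zero_l]) (use b Y zo in auto)
    finally show ?thesis .
  qed
  obtain v where v: "v \<in> Mor C" "Dom C v = Y" "Cod C v = Dom C d'" "Comp C d' v = Id C Y" "Comp C f' v = Zm C Y z"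
    using pb_univ[OF pb(1), of "Id C Y" "Zm C Y z"] Y zo b by auto
  have "Comp C v d' = Id C (Dom C d')"
    by (rule pb_uniq[OF pb(1)]) (use v b Y zo assoc[of d' v d'] assoc[of d' v f'] in \<open>auto simp: f'0\<close>)
  then have ip: "inv_pair d' v" using v b Y unfolding inv_pair_def by auto
  obtain k' where k': "(k', d') \<in> E" using pb(2) unfolding deflation_def by blast
  note kb = E_basic[OF k']
  have "(Comp C d' k', Comp C d' v) \<in> E" using E_mid[OF k' ip] kb by simp
  then have E1: "(Comp C d' k', Id C Y) \<in> E" using v by simp
  obtain K where K_def: "Dom C k' = K" by blast
  have K: "K \<in> Obj C" using kb K_def dom_obj by blast
  have k'0: "k' = Zm C K (Dom C d')"
  proof -
    have "k' = Comp C (Comp C v d') k'" using \<open>Comp C v d' = Id C (Dom C d')\<close> kb by simp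
    also have "\<dots> = Comp C v (Comp C d' k')" using assoc[of k' d' v] kb v b by simp
    also have "\<dots> = Zm C K (Dom C d')" using kb v b K_def Y K by simp
    finally show ?thesis .
  qed
  have idK: "Id C K = Zm C K K"
    by (rule ker_mono[OF conf[OF k', THEN conjunct1]]) (use kb K K_def k'0 in auto)
  obtain z0 where z0: "z0 \<in> A" "Id C z0 = Zm C z0 z0" using zeroA by blast
  have zp: "inv_pair (Zm C z0 K) (Zm C K z0)" using zero_pair z0 K idK by simp
  have cd: "Cod C (Zm C z0 K) = Dom C (Comp C d' k')" using kb b K_def z0 K Y by simp
  have F1: "(Comp C (Comp C d' k') (Zm C z0 K), Id C Y) \<in> E"
    using E_dom[OF E1 zp cd] .
  have "Dom C (Comp C (Comp C d' k') (Zm C z0 K)) = z0" using kb b K_def z0 K Y by simp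
  then have "Dom C (Comp C (Comp C d' k') (Zm C z0 K)) \<in> A" using z0 by simp
  then show ?thesis using F1 by blast
qed

lemma A_iso: "a \<in> A \<Longrightarrow> inv_pair \<alpha> \<alpha>' \<Longrightarrow> Dom C \<alpha> = a \<Longrightarrow> Cod C \<alpha> \<in> A"
proof -
  assume a: "a \<in> A" "inv_pair \<alpha> \<alpha>'" "Dom C \<alpha> = a"
  obtain k where k: "(k, Id C a) \<in> E" "Dom C k \<in> A" using id_defl[of a] a(1) A_obj by blast
  have "(k, Comp C \<alpha> (Id C a)) \<in> E" using E_cod[OF k(1) a(2)] a by simp
  then have "(k, \<alpha>) \<in> E" using a inv_pair_def by auto
  moreover have "Cod C k = a" using k E_basic a by auto
  ultimately show ?thesis using A1 a by blast
qed

definition DA where "DA d \<longleftrightarrow> (\<exists>k. (k,d) \<in> E \<and> Dom C k \<in> A)"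
definition IA where "IA i \<longleftrightarrow> (\<exists>p. (i,p) \<in> E \<and> Cod C p \<in> A)"

lemma pb_kernel: "is_pullback C f d d' f' \<Longrightarrow> (k,d) \<in> E \<Longrightarrow> (k',d') \<in> E \<Longrightarrow>
   \<exists>u w. inv_pair u w \<and> Dom C u = Dom C k' \<and> Cod C u = Dom C k"
proof -
  assume a: "is_pullback C f d d' f'" "(k,d) \<in> E" "(k',d') \<in> E"
  note b0 = pb_basic[OF a(1)] and kb0 = E_basic[OF a(2)] and kb0' = E_basic[OF a(3)]
  obtain X Y Z W K K' where ob: "Dom C d' = X" "Dom C f' = X" "Cod C d' = Z" "Dom C f = Z" "Cod C f' = Y" "Dom C d = Y"
    "Cod C f = W" "Cod C d = W" "Dom C k = K" "Cod C k = Y" "Dom C k' = K'" "Cod C k' = X" using b0 kb0 kb0' by metis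
  have ob2: "X \<in> Obj C" "Y \<in> Obj C" "Z \<in> Obj C" "W \<in> Obj C" "K \<in> Obj C" "K' \<in> Obj C"
    using ob b0 kb0 kb0' dom_obj cod_obj by metis+
  have m: "f \<in> Mor C" "d \<in> Mor C" "d' \<in> Mor C" "f' \<in> Mor C" "k \<in> Mor C" "k' \<in> Mor C" using b0 kb0 kb0' by auto
  have eq: "Comp C f d' = Comp C d f'" "Comp C d k = Zm C K W" "Comp C d' k' = Zm C K' Z"
    using b0 kb0 kb0' ob by auto
  have kk: "is_kernel C k d" using conf a by blast
  have kk': "is_kernel C k' d'" using conf a by blast
  have "Comp C d (Comp C f' k') = Comp C f (Comp C d' k')"
    using assoc[of k' f' d] assoc[of k' d' f] m ob eq by simp
  also have "\<dots> = Zm C K' W" using m ob ob2 eq by simp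
  finally obtain u where u: "u \<in> Mor C" "Dom C u = K'" "Cod C u = K" "Comp C k u = Comp C f' k'"
    using ker_factor[OF kk, of "Comp C f' k'"] m ob ob2 by auto
  have "Comp C f (Zm C K Z) = Comp C d k" using m ob ob2 eq by simp
  then obtain v where v: "v \<in> Mor C" "Dom C v = K" "Cod C v = X" "Comp C d' v = Zm C K Z" "Comp C f' v = k"
    using pb_univ[OF a(1), of "Zm C K Z" k] m ob ob2 by auto
  obtain w where w: "w \<in> Mor C" "Dom C w = K" "Cod C w = K'" "Comp C k' w = v"
    using ker_factor[OF kk', of v] v m ob ob2 eq by auto
  have uw: "Comp C u w = Id C K"
  proof (rule ker_mono[OF kk])
    have "Comp C k (Comp C u w) = Comp C (Comp C k u) w" using assoc[of w u k] u w m ob by simp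
    also have "\<dots> = Comp C f' v" using u w assoc[of w k' f'] m ob by simp
    finally show "Comp C k (Comp C u w) = Comp C k (Id C K)" using v m ob ob2 by simp
  qed (use u w m ob ob2 in auto)
  have wu: "Comp C w u = Id C K'"
  proof (rule ker_mono[OF kk'])
    show "Comp C k' (Comp C w u) = Comp C k' (Id C K')"
    proof (rule pb_uniq[OF a(1)])
      have "Comp C d' (Comp C k' (Comp C w u)) = Comp C d' (Comp C (Comp C k' w) u)"
        using assoc[of u w k'] u w m ob by simp
      also have "\<dots> = Comp C (Comp C d' v) u" using assoc[of u v d'] u v w m ob by simp
      also have "\<dots> = Zm C K' Z" using v w u m ob ob2 by simp
      also have "\<dots> = Comp C d' (Comp C k' (Id C K'))" using m ob ob2 eq by simp
      finally show "Comp C d' (Comp C k' (Comp C w u)) = Comp C d' (Comp C k' (Id C K'))" .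
      have "Comp C f' (Comp C k' (Comp C w u)) = Comp C f' (Comp C (Comp C k' w) u)"
        using assoc[of u w k'] u w m ob by simp
      also have "\<dots> = Comp C (Comp C f' v) u" using assoc[of u v f'] u v w m ob by simp
      also have "\<dots> = Comp C f' (Comp C k' (Id C K'))" using v w u m ob ob2 by simp
      finally show "Comp C f' (Comp C k' (Comp C w u)) = Comp C f' (Comp C k' (Id C K'))" .
    qed (use u w m ob ob2 in \<open>simp_all\<close>)
  qed (use u w m ob ob2 in \<open>simp_all\<close>)
  have "inv_pair u w" using u w uw wu unfolding inv_pair_def by auto
  then show ?thesis by (intro exI[of _ u] exI[of _ w]) (use u ob in simp)
qed

lemma pb_DA: "is_pullback C f d d' f' \<Longrightarrow> DA d \<Longrightarrow> deflation E d' \<Longrightarrow> DA d'"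
proof -
  assume a: "is_pullback C f d d' f'" "DA d" "deflation E d'"
  obtain k where k: "(k,d) \<in> E" "Dom C k \<in> A" using a unfolding DA_def by blast
  obtain k' where k': "(k',d') \<in> E" using a unfolding deflation_def by blast
  obtain u w where uw: "inv_pair u w" "Dom C u = Dom C k'" "Cod C u = Dom C k" using pb_kernel[OF a(1) k(1) k'] by blast
  have wu: "inv_pair w u" using inv_pair_sym[OF uw(1)] .
  have "Dom C w = Dom C k" "Cod C w = Dom C k'" using uw unfolding inv_pair_def by auto
  then have "Dom C k' \<in> A" using A_iso[OF k(2) wu] by simp
  then show ?thesis using k' unfolding DA_def by blast
qed

end


context pc begin

abbreviation S where "S \<equiv> weak_isos C E A"

lemma S_mor: "s \<in> S \<Longrightarrow> s \<in> Mor C"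
  by (induction rule: weak_isos.induct) (use E_basic in auto)

lemma pb_intro:
  assumes "f \<in> Mor C" "s \<in> Mor C" "t \<in> Mor C" "g \<in> Mor C"
     "Cod C f = Cod C s" "Cod C t = Dom C f" "Cod C g = Dom C s" "Dom C t = Dom C g"
     "Comp C f t = Comp C s g"
   and ex: "\<And>h k. h \<in> Mor C \<Longrightarrow> k \<in> Mor C \<Longrightarrow> Dom C k = Dom C h \<Longrightarrow> Cod C h = Dom C f \<Longrightarrow>
      Cod C k = Dom C s \<Longrightarrow> Comp C f h = Comp C s k \<Longrightarrow>
      \<exists>u. u \<in> Mor C \<and> Dom C u = Dom C h \<and> Cod C u = Dom C t \<and> Comp C t u = h \<and> Comp C g u = k"
   and un: "\<And>u1 u2. u1 \<in> Mor C \<Longrightarrow> u2 \<in> Mor C \<Longrightarrow> Dom C u2 = Dom C u1 \<Longrightarrow>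
      Cod C u1 = Dom C t \<Longrightarrow> Cod C u2 = Dom C t \<Longrightarrow> Comp C t u1 = Comp C t u2 \<Longrightarrow> Comp C g u1 = Comp C g u2 \<Longrightarrow> u1 = u2"
  shows "is_pullback C f s t g"
  unfolding is_pullback_def
proof (intro conjI ballI impI)
  fix x h k assume x: "x \<in> Obj C" "h \<in> hom C x (Dom C f)" "k \<in> hom C x (Dom C s)" "Comp C f h = Comp C s k"
  then obtain u where u: "u \<in> Mor C" "Dom C u = Dom C h" "Cod C u = Dom C t" "Comp C t u = h" "Comp C g u = k"
    using ex[of h k] unfolding hom_def by auto
  show "\<exists>!u. u \<in> hom C x (Dom C t) \<and> Comp C t u = h \<and> Comp C g u = k"
  proof (rule ex1I[of _ u])
    show "u \<in> hom C x (Dom C t) \<and> Comp C t u = h \<and> Comp C g u = k" using u x unfolding hom_def by auto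
    fix u' assume "u' \<in> hom C x (Dom C t) \<and> Comp C t u' = h \<and> Comp C g u' = k"
    then show "u' = u" using un[of u' u] u x unfolding hom_def by auto
  qed
qed (use assms in auto)

lemma pb_paste:
  assumes p2: "is_pullback C f s2 t2 g2" and p1: "is_pullback C g2 s1 t1 g1" and c: "Cod C s1 = Dom C s2"
  shows "is_pullback C f (Comp C s2 s1) (Comp C t2 t1) g1"
proof -
  note b2 = pb_basic[OF p2] and b1 = pb_basic[OF p1]
  have m: "f \<in> Mor C" "s2 \<in> Mor C" "t2 \<in> Mor C" "g2 \<in> Mor C" "s1 \<in> Mor C" "t1 \<in> Mor C" "g1 \<in> Mor C"
    using b1 b2 by auto
  obtain X1 X2 Y1 Y2 Z W where ob: "Dom C f = Z" "Cod C f = W" "Dom C s2 = Y2" "Cod C s2 = W"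
    "Dom C t2 = X2" "Cod C t2 = Z" "Dom C g2 = X2" "Cod C g2 = Y2"
    "Dom C s1 = Y1" "Cod C s1 = Y2" "Dom C t1 = X1" "Cod C t1 = X2" "Dom C g1 = X1" "Cod C g1 = Y1"
    using b1 b2 c by metis
  have eq: "Comp C f t2 = Comp C s2 g2" "Comp C g2 t1 = Comp C s1 g1" using b1 b2 by auto
  show ?thesis
  proof (rule pb_intro)
    show "Comp C f (Comp C t2 t1) = Comp C (Comp C s2 s1) g1"
      using assoc[of t1 t2 f] assoc[of g1 s1 s2] assoc[of t1 g2 s2] m ob eq by simp
  next
    fix h k assume a: "h \<in> Mor C" "k \<in> Mor C" "Dom C k = Dom C h" "Cod C h = Dom C f"
      "Cod C k = Dom C (Comp C s2 s1)" "Comp C f h = Comp C (Comp C s2 s1) k"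
    have a5: "Cod C k = Y1" using a(5) m ob by simp
    have "Comp C f h = Comp C s2 (Comp C s1 k)" using a(6) assoc[of k s1 s2] m ob a5 a by simp
    then obtain u2 where u2: "u2 \<in> Mor C" "Dom C u2 = Dom C h" "Cod C u2 = X2" "Comp C t2 u2 = h" "Comp C g2 u2 = Comp C s1 k"
      using pb_univ[OF p2, of h "Comp C s1 k"] a m ob a5 by auto
    obtain u1 where u1: "u1 \<in> Mor C" "Dom C u1 = Dom C h" "Cod C u1 = X1" "Comp C t1 u1 = u2" "Comp C g1 u1 = k"
      using pb_univ[OF p1, of u2 k] a m ob a5 u2 by auto
    show "\<exists>u. u \<in> Mor C \<and> Dom C u = Dom C h \<and> Cod C u = Dom C (Comp C t2 t1) \<and> Comp C (Comp C t2 t1) u = h \<and> Comp C g1 u = k"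
      by (rule exI[of _ u1]) (use u1 u2 m ob assoc[of u1 t1 t2] in simp)
  next
    fix u1 u2 assume a: "u1 \<in> Mor C" "u2 \<in> Mor C" "Dom C u2 = Dom C u1"
      "Cod C u1 = Dom C (Comp C t2 t1)" "Cod C u2 = Dom C (Comp C t2 t1)" "Comp C (Comp C t2 t1) u1 = Comp C (Comp C t2 t1) u2"
      "Comp C g1 u1 = Comp C g1 u2"
    have c1: "Cod C u1 = X1" "Cod C u2 = X1" using a m ob by auto
    have e1: "Comp C t2 (Comp C t1 u1) = Comp C t2 (Comp C t1 u2)" using a(6) assoc[of u1 t1 t2] assoc[of u2 t1 t2] m ob c1 a by simp
    have e2: "Comp C g2 (Comp C t1 u1) = Comp C g2 (Comp C t1 u2)"
    proof -
      have "Comp C g2 (Comp C t1 u1) = Comp C s1 (Comp C g1 u1)" using assoc[of u1 t1 g2] assoc[of u1 g1 s1] m ob c1 a eq by simp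
      also have "\<dots> = Comp C s1 (Comp C g1 u2)" using a by simp
      also have "\<dots> = Comp C g2 (Comp C t1 u2)" using assoc[of u2 t1 g2] assoc[of u2 g1 s1] m ob c1 a eq by simp
      finally show ?thesis .
    qed
    have tt: "Comp C t1 u1 = Comp C t1 u2"
      by (rule pb_uniq[OF p2 _ _ _ _ _ e1 e2]) (use m ob c1 a in auto)
    show "u1 = u2" by (rule pb_uniq[OF p1 a(1) a(2) a(3) _ _ tt a(7)]) (use m ob c1 in auto)
  qed (use m ob c in auto)
qed

lemma pb_IA: "(i,p) \<in> E \<Longrightarrow> Cod C p \<in> A \<Longrightarrow> f \<in> Mor C \<Longrightarrow> Cod C f = Cod C i \<Longrightarrow> \<exists>t g. t \<in> S \<and> is_pullback C f i t g"
proof -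
  assume a: "(i,p) \<in> E" "Cod C p \<in> A" "f \<in> Mor C" "Cod C f = Cod C i"
  note ib = E_basic[OF a(1)]
  obtain W Z Y A0 where ob: "Cod C f = W" "Cod C i = W" "Dom C p = W" "Dom C f = Z" "Dom C i = Y" "Cod C p = A0"
    using a ib by metis
  have A0: "A0 \<in> A" "A0 \<in> Obj C" using a ob by auto
  have m: "i \<in> Mor C" "p \<in> Mor C" using ib by auto
  have obj: "W \<in> Obj C" "Z \<in> Obj C" "Y \<in> Obj C" using ob m a dom_obj cod_obj by metis+
  obtain k e j p2 where A2r: "(k,e) \<in> E" "(j,p2) \<in> E" "Cod C e = Dom C j" "Cod C e \<in> A"
   "Dom C e = Dom C (Comp C p f)" "Cod C j = Cod C (Comp C p f)" "Comp C p f = Comp C j e"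
  proof -
    have h: "Comp C p f \<in> Mor C" "Cod C (Comp C p f) \<in> A" using a ob m A0 by auto
    show ?thesis using A2[OF h] that by blast
  qed
  note keb = E_basic[OF A2r(1)] and jb = E_basic[OF A2r(2)]
  have e1: "Cod C k = Dom C e" using keb by blast
  have e2: "Dom C e = Z" using A2r(5) m a ob by simp
  have e3: "Cod C j = A0" using A2r(6) m a ob by simp
  obtain X A1 where x1: "Dom C k = X" "Cod C e = A1" by blast
  have ob2: "Dom C k = X" "Cod C k = Z" "Dom C e = Z" "Cod C e = A1" "Dom C j = A1" "Cod C j = A0"
    using x1 e1 e2 e3 A2r(3) by auto
  have m2: "k \<in> Mor C" "e \<in> Mor C" "j \<in> Mor C" using keb jb by auto
  have obj2: "X \<in> Obj C" "A1 \<in> Obj C" using ob2 m2 dom_obj cod_obj by metis+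
  have ek: "Comp C e k = Zm C X A1" using keb ob2 by simp
  have kS: "k \<in> S" using A2r ob2 weak_isos.infl by metis
  have ki: "is_kernel C i p" and kk: "is_kernel C k e" and kj: "is_kernel C j p2" using conf a A2r by blast+
  have "Comp C p (Comp C f k) = Comp C j (Comp C e k)"
    using assoc[of k f p] assoc[of k e j] A2r(7) m m2 a ob ob2 by simp
  also have "\<dots> = Zm C X A0" using ek m2 ob2 obj2 by simp
  finally obtain g where g: "g \<in> Mor C" "Dom C g = X" "Cod C g = Y" "Comp C i g = Comp C f k"
    using ker_factor[OF ki, of "Comp C f k"] m m2 a ob ob2 by auto
  have "is_pullback C f i k g"
  proof (rule pb_intro)
    fix h k' assume b: "h \<in> Mor C" "k' \<in> Mor C" "Dom C k' = Dom C h" "Cod C h = Dom C f"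
      "Cod C k' = Dom C i" "Comp C f h = Comp C i k'"
    obtain x where x: "Dom C h = x" by blast
    have xo: "x \<in> Obj C" using x b dom_obj by blast
    have "Comp C j (Comp C e h) = Comp C p (Comp C f h)" using assoc[of h e j] assoc[of h f p] A2r(7) b m m2 a ob ob2 by simp
    also have "\<dots> = Comp C (Comp C p i) k'" using b assoc[of k' i p] m ob by simp
    also have "\<dots> = Zm C x A0" using ib b ob x A0 by simp
    also have "\<dots> = Comp C j (Zm C x A1)" using m2 ob2 xo by simp
    finally have jj: "Comp C j (Comp C e h) = Comp C j (Zm C x A1)" .
    have "Comp C e h = Zm C x A1" 
      by (rule ker_mono[OF kj _ _ _ _ _ jj]) (use b m2 ob ob2 xo x in auto)
    then obtain u where u: "u \<in> Mor C" "Dom C u = x" "Cod C u = X" "Comp C k u = h"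
      using ker_factor[OF kk, of h] b ob ob2 x by auto
    have "Comp C g u = k'"
    proof (rule ker_mono[OF ki])
      show "Comp C i (Comp C g u) = Comp C i k'"
        using assoc[of u g i] assoc[of u k f] u g b m m2 ob ob2 a by simp
    qed (use u g b m m2 ob ob2 x in simp_all)
    then show "\<exists>u. u \<in> Mor C \<and> Dom C u = Dom C h \<and> Cod C u = Dom C k \<and> Comp C k u = h \<and> Comp C g u = k'"
      using u x ob2 by auto
  next
    fix u1 u2 assume b: "u1 \<in> Mor C" "u2 \<in> Mor C" "Dom C u2 = Dom C u1" "Cod C u1 = Dom C k" "Cod C u2 = Dom C k"
      "Comp C k u1 = Comp C k u2" "Comp C g u1 = Comp C g u2"
    show "u1 = u2" by (rule ker_mono[OF kk]) (use b in auto)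
  qed (use m m2 g ob ob2 a in auto)
  then show ?thesis using kS by blast
qed

lemma RMS2pb: "s \<in> S \<Longrightarrow> f \<in> Mor C \<Longrightarrow> Cod C f = Cod C s \<Longrightarrow> \<exists>t g. t \<in> S \<and> is_pullback C f s t g"
proof (induction s arbitrary: f rule: weak_isos.induct)
  case (infl i p)
  then show ?case using pb_IA by blast
next
  case (defl k d)
  obtain d' f' where pb: "is_pullback C f d d' f'" "deflation E d'"
    using R2[of d f] defl unfolding deflation_def by blast
  have "DA d" using defl unfolding DA_def by blast
  then have "DA d'" using pb_DA pb by blast
  then obtain k' where "(k',d') \<in> E" "Dom C k' \<in> A" unfolding DA_def by blast
  then have "d' \<in> S" by (rule weak_isos.defl)
  then show ?case using pb by blast
next
  case (comp s t)
  note ms = S_mor[OF comp.hyps(1)] and mt = S_mor[OF comp.hyps(2)]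
  have "Cod C f = Cod C t" using comp ms mt by simp
  then obtain t2 g2 where p2: "t2 \<in> S" "is_pullback C f t t2 g2" using comp.IH(2)[of f] comp by blast
  note b2 = pb_basic[OF p2(2)]
  have "g2 \<in> Mor C" "Cod C g2 = Cod C s" using b2 comp by auto
  then obtain t1 g1 where p1: "t1 \<in> S" "is_pullback C g2 s t1 g1" using comp.IH(1) by blast
  have "is_pullback C f (Comp C t s) (Comp C t2 t1) g1" by (rule pb_paste[OF p2(2) p1(2) comp.hyps(3)])
  moreover have "Comp C t2 t1 \<in> S"
    by (rule weak_isos.comp[OF p1(1) p2(1)]) (use pb_basic[OF p1(2)] b2 in auto)
  ultimately show ?case by blast
qed

end


context pc begin

lemma ker_intro:
  assumes "f \<in> Mor C" "g \<in> Mor C" "Cod C f = Dom C g" "Comp C g f = Zm C (Dom C f) (Cod C g)"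
   and ex: "\<And>h. h \<in> Mor C \<Longrightarrow> Cod C h = Dom C g \<Longrightarrow> Comp C g h = Zm C (Dom C h) (Cod C g) \<Longrightarrow>
      \<exists>u. u \<in> Mor C \<and> Dom C u = Dom C h \<and> Cod C u = Dom C f \<and> Comp C f u = h"
   and un: "\<And>u1 u2. u1 \<in> Mor C \<Longrightarrow> u2 \<in> Mor C \<Longrightarrow> Dom C u2 = Dom C u1 \<Longrightarrow>
      Cod C u1 = Dom C f \<Longrightarrow> Cod C u2 = Dom C f \<Longrightarrow> Comp C f u1 = Comp C f u2 \<Longrightarrow> u1 = u2"
  shows "is_kernel C f g"
  unfolding is_kernel_def
proof (intro conjI ballI impI)
  fix x h assume x: "x \<in> Obj C" "h \<in> hom C x (Dom C g)" "Comp C g h = Zm C x (Cod C g)"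
  then obtain u where u: "u \<in> Mor C" "Dom C u = Dom C h" "Cod C u = Dom C f" "Comp C f u = h"
    using ex[of h] unfolding hom_def by auto
  show "\<exists>!u. u \<in> hom C x (Dom C f) \<and> Comp C f u = h"
  proof (rule ex1I[of _ u])
    show "u \<in> hom C x (Dom C f) \<and> Comp C f u = h" using u x unfolding hom_def by auto
    fix u' assume "u' \<in> hom C x (Dom C f) \<and> Comp C f u' = h"
    then show "u' = u" using un[of u' u] u x unfolding hom_def by auto
  qed
qed (use assms in auto)

lemma coker_intro:
  assumes "f \<in> Mor C" "g \<in> Mor C" "Cod C f = Dom C g" "Comp C g f = Zm C (Dom C f) (Cod C g)"
   and ex: "\<And>h. h \<in> Mor C \<Longrightarrow> Dom C h = Cod C f \<Longrightarrow> Comp C h f = Zm C (Dom C f) (Cod C h) \<Longrightarrow>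
      \<exists>u. u \<in> Mor C \<and> Dom C u = Cod C g \<and> Cod C u = Cod C h \<and> Comp C u g = h"
   and un: "\<And>u1 u2. u1 \<in> Mor C \<Longrightarrow> u2 \<in> Mor C \<Longrightarrow> Cod C u2 = Cod C u1 \<Longrightarrow>
      Dom C u1 = Cod C g \<Longrightarrow> Dom C u2 = Cod C g \<Longrightarrow> Comp C u1 g = Comp C u2 g \<Longrightarrow> u1 = u2"
  shows "is_cokernel C g f"
  unfolding is_cokernel_def
proof (intro conjI ballI impI)
  fix x h assume x: "x \<in> Obj C" "h \<in> hom C (Cod C f) x" "Comp C h f = Zm C (Dom C f) x"
  then obtain u where u: "u \<in> Mor C" "Dom C u = Cod C g" "Cod C u = Cod C h" "Comp C u g = h"
    using ex[of h] unfolding hom_def by auto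
  show "\<exists>!u. u \<in> hom C (Cod C g) x \<and> Comp C u g = h"
  proof (rule ex1I[of _ u])
    show "u \<in> hom C (Cod C g) x \<and> Comp C u g = h" using u x unfolding hom_def by auto
    fix u' assume "u' \<in> hom C (Cod C g) x \<and> Comp C u' g = h"
    then show "u' = u" using un[of u' u] u x unfolding hom_def by auto
  qed
qed (use assms in auto)

lemma ker_comp_pb:
  assumes pb: "is_pullback C k2 d1 \<delta> \<iota>" and kk: "is_kernel C k2 d2" and c: "Cod C d1 = Dom C d2"
  shows "is_kernel C \<iota> (Comp C d2 d1)"
proof -
  note b0 = pb_basic[OF pb] and kb0 = ker_basic[OF kk]
  obtain P X Y Z K2 where ob: "Dom C \<delta> = P" "Dom C \<iota> = P" "Cod C \<delta> = K2" "Dom C k2 = K2" "Cod C \<iota> = X"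
    "Dom C d1 = X" "Cod C d1 = Y" "Cod C k2 = Y" "Dom C d2 = Y" "Cod C d2 = Z" using b0 kb0 c by metis
  have m: "k2 \<in> Mor C" "d1 \<in> Mor C" "\<delta> \<in> Mor C" "\<iota> \<in> Mor C" "d2 \<in> Mor C" using b0 kb0 by auto
  have obj: "P \<in> Obj C" "X \<in> Obj C" "Y \<in> Obj C" "Z \<in> Obj C" "K2 \<in> Obj C" using ob m dom_obj cod_obj by metis+
  have eq: "Comp C k2 \<delta> = Comp C d1 \<iota>" "Comp C d2 k2 = Zm C K2 Z" using b0 kb0 ob by auto
  show ?thesis
  proof (rule ker_intro)
    have "Comp C (Comp C d2 d1) \<iota> = Comp C d2 (Comp C d1 \<iota>)" using assoc[of \<iota> d1 d2] m ob by simp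
    also have "\<dots> = Comp C (Comp C d2 k2) \<delta>" using eq assoc[of \<delta> k2 d2] m ob by simp
    also have "\<dots> = Zm C P Z" using eq m ob obj by simp
    finally show "Comp C (Comp C d2 d1) \<iota> = Zm C (Dom C \<iota>) (Cod C (Comp C d2 d1))" using m ob by simp
  next
    fix h assume h: "h \<in> Mor C" "Cod C h = Dom C (Comp C d2 d1)" "Comp C (Comp C d2 d1) h = Zm C (Dom C h) (Cod C (Comp C d2 d1))"
    obtain x where x: "Dom C h = x" by blast
    have h2: "Cod C h = X" "Comp C d2 (Comp C d1 h) = Zm C x Z" using h m ob x assoc[of h d1 d2] by auto
    obtain v where v: "v \<in> Mor C" "Dom C v = x" "Cod C v = K2" "Comp C k2 v = Comp C d1 h"
      using ker_factor[OF kk, of "Comp C d1 h"] h h2 m ob x by auto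
    obtain u where u: "u \<in> Mor C" "Dom C u = x" "Cod C u = P" "Comp C \<delta> u = v" "Comp C \<iota> u = h"
      using pb_univ[OF pb, of v h] v h h2 m ob x by auto
    show "\<exists>u. u \<in> Mor C \<and> Dom C u = Dom C h \<and> Cod C u = Dom C \<iota> \<and> Comp C \<iota> u = h"
      using u x ob by auto
  next
    fix u1 u2 assume a: "u1 \<in> Mor C" "u2 \<in> Mor C" "Dom C u2 = Dom C u1" "Cod C u1 = Dom C \<iota>" "Cod C u2 = Dom C \<iota>"
      "Comp C \<iota> u1 = Comp C \<iota> u2"
    have "Comp C k2 (Comp C \<delta> u1) = Comp C k2 (Comp C \<delta> u2)"
      using assoc[of u1 \<delta> k2] assoc[of u2 \<delta> k2] assoc[of u1 \<iota> d1] assoc[of u2 \<iota> d1] a eq m ob by simp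
    then have "Comp C \<delta> u1 = Comp C \<delta> u2" by (rule ker_mono[OF kk, rotated -1]) (use a m ob in auto)
    then show "u1 = u2" by (rule pb_uniq[OF pb a(1) a(2) a(3) _ _ _ a(6), rotated -1]) (use a ob in auto)
  qed (use m ob c in auto)
qed

lemma DA_comp: "DA d1 \<Longrightarrow> DA d2 \<Longrightarrow> Cod C d1 = Dom C d2 \<Longrightarrow> DA (Comp C d2 d1)"
proof -
  assume a: "DA d1" "DA d2" "Cod C d1 = Dom C d2"
  obtain k1 where k1: "(k1,d1) \<in> E" "Dom C k1 \<in> A" using a unfolding DA_def by blast
  obtain k2 where k2: "(k2,d2) \<in> E" "Dom C k2 \<in> A" using a unfolding DA_def by blast
  note kb1 = E_basic[OF k1(1)] and kb2 = E_basic[OF k2(1)]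
  have "deflation E (Comp C d2 d1)" using R1[of d1 d2] k1 k2 a unfolding deflation_def by blast
  then obtain k where k: "(k, Comp C d2 d1) \<in> E" unfolding deflation_def by blast
  have "deflation E d1" using k1 unfolding deflation_def by blast
  then obtain \<delta> \<iota> where pb: "is_pullback C k2 d1 \<delta> \<iota>" "deflation E \<delta>"
    using R2[of d1 k2] kb2 a by auto
  have "DA \<delta>" using pb_DA[OF pb(1)] a(1) pb(2) by blast
  then obtain \<kappa> where ka: "(\<kappa>, \<delta>) \<in> E" "Dom C \<kappa> \<in> A" unfolding DA_def by blast
  note bb = pb_basic[OF pb(1)] and kab = E_basic[OF ka(1)]
  have "Cod C \<delta> \<in> A" using bb k2 by simp
  then have PA: "Cod C \<kappa> \<in> A" using A1[OF ka(1)] ka(2) by blast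
  have ki: "is_kernel C \<iota> (Comp C d2 d1)" by (rule ker_comp_pb[OF pb(1) _ a(3)]) (use conf k2 in blast)
  obtain \<alpha> \<alpha>' where al: "inv_pair \<alpha> \<alpha>'" "Dom C \<alpha> = Dom C k" "Cod C \<alpha> = Dom C \<iota>" "k = Comp C \<iota> \<alpha>"
    using kers_iso[OF ki conf[OF k, THEN conjunct1]] by blast
  have "Dom C \<alpha>' = Dom C \<iota>" "Cod C \<alpha>' = Dom C k" using al unfolding inv_pair_def by auto
  moreover have "Dom C \<iota> \<in> A" using PA kab bb by simp
  ultimately have "Dom C k \<in> A" using A_iso[OF _ inv_pair_sym[OF al(1)]] by metis
  then show ?thesis using k unfolding DA_def by blast
qed


lemma infl_ker: "inflation E q \<Longrightarrow> \<exists>r. is_kernel C q r" using conf unfolding inflation_def by blast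

lemma IA_comp: "IA i1 \<Longrightarrow> IA i2 \<Longrightarrow> Cod C i1 = Dom C i2 \<Longrightarrow> IA (Comp C i2 i1)"
proof -
  assume a: "IA i1" "IA i2" "Cod C i1 = Dom C i2"
  obtain p1 where p1: "(i1,p1) \<in> E" "Cod C p1 \<in> A" using a unfolding IA_def by blast
  obtain p2 where p2: "(i2,p2) \<in> E" "Cod C p2 \<in> A" using a unfolding IA_def by blast
  note b1 = E_basic[OF p1(1)] and b2 = E_basic[OF p2(1)]
  obtain X Y Z A1 A2 where ob: "Dom C i1 = X" "Cod C i1 = Y" "Dom C p1 = Y" "Cod C p1 = A1"
    "Dom C i2 = Y" "Cod C i2 = Z" "Dom C p2 = Z" "Cod C p2 = A2" using a b1 b2 by metis
  have m: "i1 \<in> Mor C" "p1 \<in> Mor C" "i2 \<in> Mor C" "p2 \<in> Mor C" using b1 b2 by auto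
  have obj: "X \<in> Obj C" "Y \<in> Obj C" "Z \<in> Obj C" "A1 \<in> Obj C" "A2 \<in> Obj C" using ob m dom_obj cod_obj by metis+
  have AA: "A1 \<in> A" "A2 \<in> A" using p1 p2 ob by auto
  have eq: "Comp C p1 i1 = Zm C X A1" "Comp C p2 i2 = Zm C Y A2" using b1 b2 ob by auto
  have ki1: "is_kernel C i1 p1" and ki2: "is_kernel C i2 p2" and ck2: "is_cokernel C p2 i2" using conf p1 p2 by blast+
  obtain p q where po: "is_pushout C i2 p1 p q" "deflation E p" "inflation E q"
  proof -
    have "inflation E i2" "deflation E p1" using p1 p2 unfolding inflation_def deflation_def by blast+
    moreover have "Dom C i2 = Dom C p1" "Cod C p1 \<in> A" using ob AA by auto
    ultimately show ?thesis using A3raw that by blast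
  qed
  note pb0 = po_basic[OF po(1)]
  obtain P where obP: "Dom C p = Z" "Cod C p = P" "Dom C q = A1" "Cod C q = P" using pb0 ob by metis
  have mq: "p \<in> Mor C" "q \<in> Mor C" using pb0 by auto
  have Po: "P \<in> Obj C" using obP mq cod_obj by metis
  have peq: "Comp C p i2 = Comp C q p1" using pb0 by auto
  obtain r' where r': "r' \<in> Mor C" "Dom C r' = P" "Cod C r' = A2" "Comp C r' p = p2" "Comp C r' q = Zm C A1 A2"
    using po_univ[OF po(1), of p2 "Zm C A1 A2"] m mq ob obP obj eq by auto
  have cr: "is_cokernel C r' q"
  proof (rule coker_intro)
    fix h assume h: "h \<in> Mor C" "Dom C h = Cod C q" "Comp C h q = Zm C (Dom C q) (Cod C h)"
    obtain x where x: "Cod C h = x" by blast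
    have xo: "x \<in> Obj C" using x h cod_obj by blast
    have "Comp C (Comp C h p) i2 = Comp C h (Comp C q p1)" using assoc[of i2 p h] peq h mq m ob obP by simp
    also have "\<dots> = Comp C (Comp C h q) p1" using assoc[of p1 q h] h mq m ob obP by simp
    also have "\<dots> = Zm C Y x" using h obP x xo m ob by simp
    finally obtain u where u: "u \<in> Mor C" "Dom C u = A2" "Cod C u = x" "Comp C u p2 = Comp C h p"
      using coker_factor[OF ck2, of "Comp C h p"] h mq m ob obP x by auto
    have "Comp C u r' = h"
    proof (rule po_uniq[OF po(1)])
      show "Comp C (Comp C u r') p = Comp C h p" using assoc[of p r' u] u r' mq obP by simp
      show "Comp C (Comp C u r') q = Comp C h q" using assoc[of q r' u] u r' mq obP h x xo obj by simp
    qed (use u r' h x obP in auto)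
    then show "\<exists>u. u \<in> Mor C \<and> Dom C u = Cod C r' \<and> Cod C u = Cod C h \<and> Comp C u r' = h"
      using u r' x by auto
  next
    fix u1 u2 assume b: "u1 \<in> Mor C" "u2 \<in> Mor C" "Cod C u2 = Cod C u1" "Dom C u1 = Cod C r'" "Dom C u2 = Cod C r'"
      "Comp C u1 r' = Comp C u2 r'"
    have "Comp C u1 p2 = Comp C u2 p2" using assoc[of p r' u1] assoc[of p r' u2] b r' mq obP by (metis)
    then show "u1 = u2" by (rule coker_epi[OF ck2 b(1) b(2), rotated -1]) (use b r' ob in auto)
  qed (use r' mq obP obj in auto)
  obtain rq where "(q, rq) \<in> E" using po(3) unfolding inflation_def by blast
  then have qr': "(q, r') \<in> E" using coker_E cr by blast
  then have PA: "P \<in> A" using A1[OF qr'] AA r' obP by auto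
  have kq: "is_kernel C q r'" using conf qr' by blast
  obtain \<kappa> where ka: "(\<kappa>, p) \<in> E" using po(2) unfolding deflation_def by blast
  have "is_kernel C (Comp C i2 i1) p"
  proof (rule ker_intro)
    have "Comp C p (Comp C i2 i1) = Comp C q (Comp C p1 i1)" using assoc[of i1 i2 p] assoc[of i1 p1 q] peq m mq ob obP by simp
    also have "\<dots> = Zm C X P" using eq mq obP obj by simp
    finally show "Comp C p (Comp C i2 i1) = Zm C (Dom C (Comp C i2 i1)) (Cod C p)" using m ob obP by simp
  next
    fix h assume h: "h \<in> Mor C" "Cod C h = Dom C p" "Comp C p h = Zm C (Dom C h) (Cod C p)"
    obtain x where x: "Dom C h = x" by blast
    have xo: "x \<in> Obj C" using x h dom_obj by blast
    have "Comp C p2 h = Comp C r' (Comp C p h)" using assoc[of h p r'] r' h mq obP by simp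
    also have "\<dots> = Zm C x A2" using h r' x xo obP by simp
    finally obtain y where y: "y \<in> Mor C" "Dom C y = x" "Cod C y = Y" "Comp C i2 y = h"
      using ker_factor[OF ki2, of h] h ob obP x by auto
    have "Comp C q (Comp C p1 y) = Comp C p h" using assoc[of y p1 q] assoc[of y i2 p] peq y m mq ob obP by simp
    also have "\<dots> = Comp C q (Zm C x A1)" using h x xo mq obP obj by simp
    finally have qq: "Comp C q (Comp C p1 y) = Comp C q (Zm C x A1)" .
    have "Comp C p1 y = Zm C x A1" by (rule ker_mono[OF kq _ _ _ _ _ qq]) (use y m ob obP obj xo in auto)
    then obtain w where w: "w \<in> Mor C" "Dom C w = x" "Cod C w = X" "Comp C i1 w = y"
      using ker_factor[OF ki1, of y] y m ob by auto
    show "\<exists>u. u \<in> Mor C \<and> Dom C u = Dom C h \<and> Cod C u = Dom C (Comp C i2 i1) \<and> Comp C (Comp C i2 i1) u = h"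
      by (rule exI[of _ w]) (use w y x m ob assoc[of w i1 i2] in simp)
  next
    fix u1 u2 assume b: "u1 \<in> Mor C" "u2 \<in> Mor C" "Dom C u2 = Dom C u1" "Cod C u1 = Dom C (Comp C i2 i1)"
      "Cod C u2 = Dom C (Comp C i2 i1)" "Comp C (Comp C i2 i1) u1 = Comp C (Comp C i2 i1) u2"
    have c: "Cod C u1 = X" "Cod C u2 = X" using b m ob by auto
    have "Comp C i2 (Comp C i1 u1) = Comp C i2 (Comp C i1 u2)" using b(6) assoc[of u1 i1 i2] assoc[of u2 i1 i2] b c m ob by simp
    then have "Comp C i1 u1 = Comp C i1 u2" by (rule ker_mono[OF ki2, rotated -1]) (use b c m ob in auto)
    then show "u1 = u2" by (rule ker_mono[OF ki1, rotated -1]) (use b c m ob in auto)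
  qed (use m mq ob obP in auto)
  then have "(Comp C i2 i1, p) \<in> E" using ker_E[OF ka] by blast
  then show ?thesis using PA obP unfolding IA_def by auto
qed

end


context pc begin

lemma swap: "IA i \<Longrightarrow> DA d \<Longrightarrow> Cod C i = Dom C d \<Longrightarrow>
  \<exists>i' d'. IA i' \<and> DA d' \<and> Cod C d' = Dom C i' \<and> Comp C d i = Comp C i' d'"
proof -
  assume a: "IA i" "DA d" "Cod C i = Dom C d"
  obtain p where ip: "(i,p) \<in> E" "Cod C p \<in> A" using a unfolding IA_def by blast
  obtain k where kd: "(k,d) \<in> E" "Dom C k \<in> A" using a unfolding DA_def by blast
  note ib = E_basic[OF ip(1)] and kb = E_basic[OF kd(1)]
  obtain X Y Z K A0 where ob: "Dom C i = X" "Cod C i = Y" "Dom C p = Y" "Cod C p = A0"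
    "Dom C k = K" "Cod C k = Y" "Dom C d = Y" "Cod C d = Z" using a ib kb by metis
  have m: "i \<in> Mor C" "p \<in> Mor C" "k \<in> Mor C" "d \<in> Mor C" using ib kb by auto
  have obj: "X \<in> Obj C" "Y \<in> Obj C" "Z \<in> Obj C" "K \<in> Obj C" "A0 \<in> Obj C" using ob m dom_obj cod_obj by metis+
  have AA: "K \<in> A" "A0 \<in> A" using ip kd ob by auto
  have eq: "Comp C p i = Zm C X A0" "Comp C d k = Zm C K Z" using ib kb ob by auto
  have ki: "is_kernel C i p" and kk: "is_kernel C k d" and ckd: "is_cokernel C d k" using conf ip kd by blast+
  obtain te e j c where s1: "(te,e) \<in> E" "(j,c) \<in> E" "Cod C e = Dom C j" "Cod C e \<in> A"
   "Dom C e = Dom C (Comp C p k)" "Cod C j = Cod C (Comp C p k)" "Comp C p k = Comp C j e"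
  proof -
    have h: "Comp C p k \<in> Mor C" "Cod C (Comp C p k) \<in> A" using m ob AA by auto
    show ?thesis using A2[OF h] that by blast
  qed
  note teb = E_basic[OF s1(1)] and jb = E_basic[OF s1(2)]
  obtain A1 T B where ob1: "Dom C te = T" "Cod C te = K" "Dom C e = K" "Cod C e = A1" "Dom C j = A1" "Cod C j = A0"
    "Dom C c = A0" "Cod C c = B"
  proof -
    have "Cod C te = Dom C e" "Dom C c = Cod C j" using teb jb by auto
    moreover have "Dom C e = K" using s1(5) m ob by simp
    moreover have "Cod C j = A0" using s1(6) m ob by simp
    ultimately show ?thesis using that s1(3) by metis
  qed
  have m1: "te \<in> Mor C" "e \<in> Mor C" "j \<in> Mor C" "c \<in> Mor C" using teb jb by auto
  have obj1: "A1 \<in> Obj C" "T \<in> Obj C" "B \<in> Obj C" using ob1 m1 dom_obj cod_obj by metis+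
  have A1A: "A1 \<in> A" using s1 ob1 by simp
  have BA: "B \<in> A" using A1[OF s1(2)] AA ob1 by auto
  have eq1: "Comp C p k = Comp C j e" "Comp C e te = Zm C T A1" "Comp C c j = Zm C A1 B" using s1 teb jb ob1 by auto
  have kj: "is_kernel C j c" and kte: "is_kernel C te e" using conf s1 by blast+
  obtain \<pi> q where po: "is_pushout C k e \<pi> q" "deflation E \<pi>" "inflation E q"
  proof -
    have "inflation E k" "deflation E e" using kd s1 unfolding inflation_def deflation_def by blast+
    moreover have "Dom C k = Dom C e" "Cod C e \<in> A" using ob ob1 A1A by auto
    ultimately show ?thesis using A3raw that by blast
  qed
  note pob = po_basic[OF po(1)]
  obtain P where obP: "Dom C \<pi> = Y" "Cod C \<pi> = P" "Dom C q = A1" "Cod C q = P" using pob ob ob1 by metis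
  have mq: "\<pi> \<in> Mor C" "q \<in> Mor C" using pob by auto
  have Po: "P \<in> Obj C" using obP mq cod_obj by metis
  have peq: "Comp C \<pi> k = Comp C q e" using pob by auto
  obtain \<rho> where \<rho>: "\<rho> \<in> Mor C" "Dom C \<rho> = P" "Cod C \<rho> = A0" "Comp C \<rho> \<pi> = p" "Comp C \<rho> q = j"
    using po_univ[OF po(1), of p j] m m1 ob ob1 obP eq1 by auto
  obtain db where db: "db \<in> Mor C" "Dom C db = P" "Cod C db = Z" "Comp C db \<pi> = d" "Comp C db q = Zm C A1 Z"
    using po_univ[OF po(1), of d "Zm C A1 Z"] m m1 ob ob1 obP eq obj obj1 by auto
  have cdb: "is_cokernel C db q"
  proof (rule coker_intro)
    fix h assume h: "h \<in> Mor C" "Dom C h = Cod C q" "Comp C h q = Zm C (Dom C q) (Cod C h)"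
    obtain x where x: "Cod C h = x" by blast
    have xo: "x \<in> Obj C" using x h cod_obj by blast
    have "Comp C (Comp C h \<pi>) k = Comp C h (Comp C q e)" using assoc[of k \<pi> h] peq h mq m ob obP by simp
    also have "\<dots> = Comp C (Comp C h q) e" using assoc[of e q h] h mq m1 ob1 obP by simp
    also have "\<dots> = Zm C K x" using h obP x xo m1 ob1 by simp
    finally obtain u where u: "u \<in> Mor C" "Dom C u = Z" "Cod C u = x" "Comp C u d = Comp C h \<pi>"
      using coker_factor[OF ckd, of "Comp C h \<pi>"] h mq m ob obP x by auto
    have "Comp C u db = h"
    proof (rule po_uniq[OF po(1)])
      show "Comp C (Comp C u db) \<pi> = Comp C h \<pi>" using assoc[of \<pi> db u] u db mq obP by simp
      show "Comp C (Comp C u db) q = Comp C h q" using assoc[of q db u] u db mq obP h x xo obj1 by simp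
    qed (use u db h x obP in auto)
    then show "\<exists>u. u \<in> Mor C \<and> Dom C u = Cod C db \<and> Cod C u = Cod C h \<and> Comp C u db = h"
      using u db x by auto
  next
    fix u1 u2 assume b: "u1 \<in> Mor C" "u2 \<in> Mor C" "Cod C u2 = Cod C u1" "Dom C u1 = Cod C db" "Dom C u2 = Cod C db"
      "Comp C u1 db = Comp C u2 db"
    have "Comp C u1 d = Comp C u2 d" using assoc[of \<pi> db u1] assoc[of \<pi> db u2] b db mq obP by (metis)
    then show "u1 = u2" by (rule coker_epi[OF ckd b(1) b(2), rotated -1]) (use b db ob in auto)
  qed (use db mq obP obj1 in auto)
  obtain rq where "(q, rq) \<in> E" using po(3) unfolding inflation_def by blast
  then have qdb: "(q, db) \<in> E" using coker_E cdb by blast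
  have kq: "is_kernel C q db" using conf qdb by blast
  obtain \<kappa> where ka: "(\<kappa>, \<pi>) \<in> E" using po(2) unfolding deflation_def by blast
  note kab = E_basic[OF ka]
  obtain N where obN: "Dom C \<kappa> = N" "Cod C \<kappa> = Y" using kab obP by metis
  have mka: "\<kappa> \<in> Mor C" using kab by auto
  have No: "N \<in> Obj C" using obN mka dom_obj by metis
  have pk: "Comp C \<pi> \<kappa> = Zm C N P" using kab obN obP by simp
  have kka: "is_kernel C \<kappa> \<pi>" using conf ka by blast
  have "Comp C d \<kappa> = Comp C db (Comp C \<pi> \<kappa>)" using assoc[of \<kappa> \<pi> db] db mq obP obN mka by simp
  also have "\<dots> = Zm C N Z" using pk db No by simp
  finally obtain n where n: "n \<in> Mor C" "Dom C n = N" "Cod C n = K" "Comp C k n = \<kappa>"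
    using ker_factor[OF kk, of \<kappa>] mka obN ob by auto
  have kn: "is_kernel C n e"
  proof (rule ker_intro)
    have "Comp C q (Comp C e n) = Comp C \<pi> (Comp C k n)" using assoc[of n e q] assoc[of n k \<pi>] peq n m m1 mq ob ob1 obP by simp
    also have "\<dots> = Comp C q (Zm C N A1)" using n pk mq obP obj1 No by simp
    finally have qq: "Comp C q (Comp C e n) = Comp C q (Zm C N A1)" .
    have "Comp C e n = Zm C N A1" by (rule ker_mono[OF kq _ _ _ _ _ qq]) (use n m1 ob1 No obj1 obP mq in auto)
    then show "Comp C e n = Zm C (Dom C n) (Cod C e)" using n ob1 by simp
  next
    fix h assume h: "h \<in> Mor C" "Cod C h = Dom C e" "Comp C e h = Zm C (Dom C h) (Cod C e)"
    obtain x where x: "Dom C h = x" by blast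
    have xo: "x \<in> Obj C" using x h dom_obj by blast
    have "Comp C \<pi> (Comp C k h) = Comp C q (Comp C e h)" using assoc[of h k \<pi>] assoc[of h e q] peq h m m1 mq ob ob1 obP by simp
    also have "\<dots> = Zm C x P" using h x xo mq obP ob1 by simp
    finally obtain u where u: "u \<in> Mor C" "Dom C u = x" "Cod C u = N" "Comp C \<kappa> u = Comp C k h"
      using ker_factor[OF kka, of "Comp C k h"] h m ob ob1 obP x obN by auto
    have "Comp C k (Comp C n u) = Comp C k h" using assoc[of u n k] u n m ob by simp
    then have "Comp C n u = h" by (rule ker_mono[OF kk, rotated -1]) (use u n h ob ob1 x in auto)
    then show "\<exists>u. u \<in> Mor C \<and> Dom C u = Dom C h \<and> Cod C u = Dom C n \<and> Comp C n u = h" using u x n by auto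
  next
    fix u1 u2 assume b: "u1 \<in> Mor C" "u2 \<in> Mor C" "Dom C u2 = Dom C u1" "Cod C u1 = Dom C n" "Cod C u2 = Dom C n"
      "Comp C n u1 = Comp C n u2"
    have "Comp C \<kappa> u1 = Comp C \<kappa> u2" using assoc[of u1 n k] assoc[of u2 n k] b n m ob by (metis)
    then show "u1 = u2" by (rule ker_mono[OF kka, rotated -1]) (use b n obN in auto)
  qed (use n m1 ob1 in auto)
  obtain \<alpha>0 \<alpha>0' where al0: "inv_pair \<alpha>0 \<alpha>0'" "Dom C \<alpha>0 = Dom C n" "Cod C \<alpha>0 = Dom C te"
    using kers_iso[OF kte kn] by blast
  have "Dom C te \<in> A" using A1[OF s1(1)] AA ob1 by auto
  moreover have "Dom C \<alpha>0' = Dom C te" "Cod C \<alpha>0' = N" using al0 n unfolding inv_pair_def by auto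
  ultimately have NA: "N \<in> A" using A_iso[OF _ inv_pair_sym[OF al0(1)]] by metis
  have DApi: "DA \<pi>" using ka NA obN unfolding DA_def by blast
  obtain m0 e2 j2 c2 where s5: "(m0,e2) \<in> E" "(j2,c2) \<in> E" "Cod C e2 = Dom C j2" "Cod C e2 \<in> A"
   "Dom C e2 = Dom C \<rho>" "Cod C j2 = Cod C \<rho>" "\<rho> = Comp C j2 e2"
  proof -
    have h: "\<rho> \<in> Mor C" "Cod C \<rho> \<in> A" using \<rho> AA by auto
    show ?thesis using A2[OF h] that by blast
  qed
  note m0b = E_basic[OF s5(1)] and j2b = E_basic[OF s5(2)]
  obtain M A4 where ob5: "Dom C m0 = M" "Cod C m0 = P" "Dom C e2 = P" "Cod C e2 = A4" "Dom C j2 = A4" "Cod C j2 = A0"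
  proof -
    have "Cod C m0 = Dom C e2" using m0b by auto
    moreover have "Dom C e2 = P" using s5(5) \<rho> by simp
    moreover have "Cod C j2 = A0" using s5(6) \<rho> by simp
    ultimately show ?thesis using that s5(3) by metis
  qed
  have m5: "m0 \<in> Mor C" "e2 \<in> Mor C" "j2 \<in> Mor C" using m0b j2b by auto
  have obj5: "M \<in> Obj C" "A4 \<in> Obj C" using ob5 m5 dom_obj cod_obj by metis+
  have km: "is_kernel C m0 e2" and kj2: "is_kernel C j2 c2" using conf s5 by blast+
  have em: "Comp C e2 m0 = Zm C M A4" using m0b ob5 by simp
  have rm: "Comp C \<rho> m0 = Zm C M A0"
  proof -
    have "Comp C \<rho> m0 = Comp C j2 (Comp C e2 m0)" using s5(7) assoc[of m0 e2 j2] m5 ob5 by simp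
    also have "\<dots> = Zm C M A0" using em m5 ob5 obj5 by simp
    finally show ?thesis .
  qed
  have "Comp C j2 (Comp C e2 (Comp C \<pi> i)) = Comp C (Comp C \<rho> \<pi>) i"
    using s5(7) assoc[of "Comp C \<pi> i" e2 j2] assoc[of i \<pi> \<rho>] m5 ob5 m ob mq obP \<rho> by simp
  also have "\<dots> = Comp C j2 (Zm C X A4)" using \<rho> eq m5 ob5 obj obj5 by simp
  finally have jj: "Comp C j2 (Comp C e2 (Comp C \<pi> i)) = Comp C j2 (Zm C X A4)" .
  have "Comp C e2 (Comp C \<pi> i) = Zm C X A4" by (rule ker_mono[OF kj2 _ _ _ _ _ jj]) (use m5 ob5 m ob mq obP obj obj5 in auto)
  then obtain d2 where d2: "d2 \<in> Mor C" "Dom C d2 = X" "Cod C d2 = M" "Comp C m0 d2 = Comp C \<pi> i"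
    using ker_factor[OF km, of "Comp C \<pi> i"] m ob mq obP ob5 by auto
  obtain \<delta> \<iota> where pb: "is_pullback C m0 \<pi> \<delta> \<iota>" "deflation E \<delta>"
    using R2[OF po(2), of m0] m5 ob5 obP by auto
  note pbb = pb_basic[OF pb(1)]
  obtain X2 where ob7: "Dom C \<delta> = X2" "Dom C \<iota> = X2" "Cod C \<delta> = M" "Cod C \<iota> = Y" using pbb ob5 obP by metis
  have m7: "\<delta> \<in> Mor C" "\<iota> \<in> Mor C" using pbb by auto
  have X2o: "X2 \<in> Obj C" using ob7 m7 dom_obj by metis
  have peq7: "Comp C m0 \<delta> = Comp C \<pi> \<iota>" using pbb by auto
  have "DA \<delta>" using pb_DA[OF pb(1) DApi pb(2)] .
  then obtain \<kappa>2 where k2: "(\<kappa>2, \<delta>) \<in> E" "Dom C \<kappa>2 \<in> A" unfolding DA_def by blast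
  note k2b = E_basic[OF k2(1)]
  have "Comp C p \<iota> = Comp C \<rho> (Comp C \<pi> \<iota>)" using \<rho> assoc[of \<iota> \<pi> \<rho>] m7 ob7 mq obP by simp
  also have "\<dots> = Comp C (Comp C \<rho> m0) \<delta>" using peq7 assoc[of \<delta> m0 \<rho>] m7 ob7 m5 ob5 \<rho> by simp
  also have "\<dots> = Zm C X2 A0" using rm m7 ob7 obj by simp
  finally obtain \<alpha> where al: "\<alpha> \<in> Mor C" "Dom C \<alpha> = X2" "Cod C \<alpha> = X" "Comp C i \<alpha> = \<iota>"
    using ker_factor[OF ki, of \<iota>] m7 ob7 ob by auto
  obtain \<beta> where be: "\<beta> \<in> Mor C" "Dom C \<beta> = X" "Cod C \<beta> = X2" "Comp C \<delta> \<beta> = d2" "Comp C \<iota> \<beta> = i"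
    using pb_univ[OF pb(1), of d2 i] d2 m ob m5 ob5 ob7 obP by auto
  have ab: "Comp C \<alpha> \<beta> = Id C X"
  proof (rule ker_mono[OF ki])
    show "Comp C i (Comp C \<alpha> \<beta>) = Comp C i (Id C X)" using assoc[of \<beta> \<alpha> i] al be m ob by simp
  qed (use al be m ob obj in auto)
  have d2a: "Comp C d2 \<alpha> = \<delta>"
  proof (rule ker_mono[OF km])
    have "Comp C m0 (Comp C d2 \<alpha>) = Comp C (Comp C \<pi> i) \<alpha>" using assoc[of \<alpha> d2 m0] d2 al m5 ob5 by simp
    also have "\<dots> = Comp C m0 \<delta>" using assoc[of \<alpha> i \<pi>] al peq7 m ob mq obP by simp
    finally show "Comp C m0 (Comp C d2 \<alpha>) = Comp C m0 \<delta>" .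
  qed (use al d2 m7 ob7 ob5 in auto)
  have ba: "Comp C \<beta> \<alpha> = Id C X2"
  proof (rule pb_uniq[OF pb(1)])
    show "Comp C \<delta> (Comp C \<beta> \<alpha>) = Comp C \<delta> (Id C X2)" using assoc[of \<alpha> \<beta> \<delta>] al be d2a m7 ob7 by simp
    show "Comp C \<iota> (Comp C \<beta> \<alpha>) = Comp C \<iota> (Id C X2)" using assoc[of \<alpha> \<beta> \<iota>] al be m7 ob7 by simp
  qed (use al be ob7 X2o in auto)
  have ipab: "inv_pair \<alpha> \<beta>" using al be ab ba unfolding inv_pair_def by auto
  have "(Comp C \<alpha> \<kappa>2, Comp C \<delta> \<beta>) \<in> E" using E_mid[OF k2(1) ipab] al k2b ob7 by simp
  then have E7: "(Comp C \<alpha> \<kappa>2, d2) \<in> E" using be by simp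
  have "Dom C (Comp C \<alpha> \<kappa>2) \<in> A" using k2 k2b al ob7 by simp
  then have DAd2: "DA d2" using E7 unfolding DA_def by blast
  have "Comp C (Comp C c p) k = Comp C (Comp C c j) e" using assoc[of k p c] assoc[of e j c] eq1 m ob m1 ob1 by simp
  also have "\<dots> = Zm C K B" using eq1 m1 ob1 obj1 by simp
  finally obtain r where r: "r \<in> Mor C" "Dom C r = Z" "Cod C r = B" "Comp C r d = Comp C c p"
    using coker_factor[OF ckd, of "Comp C c p"] m ob m1 ob1 by auto
  obtain w e' j' c' where s8: "(w,e') \<in> E" "(j',c') \<in> E" "Cod C e' = Dom C j'" "Cod C e' \<in> A"
   "Dom C e' = Dom C r" "Cod C j' = Cod C r" "r = Comp C j' e'"
  proof -
    have h: "r \<in> Mor C" "Cod C r \<in> A" using r BA by auto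
    show ?thesis using A2[OF h] that by blast
  qed
  note wb = E_basic[OF s8(1)] and j'b = E_basic[OF s8(2)]
  obtain A3 where ob8: "Dom C e' = Z" "Cod C e' = A3" "Dom C j' = A3" "Cod C j' = B"
  proof -
    have "Dom C e' = Z" using s8(5) r by simp
    moreover have "Cod C j' = B" using s8(6) r by simp
    ultimately show ?thesis using that s8(3) by metis
  qed
  have m8: "e' \<in> Mor C" "j' \<in> Mor C" using wb j'b by auto
  have obj8: "A3 \<in> Obj C" using ob8 m8 cod_obj by metis
  have kj': "is_kernel C j' c'" using conf s8 by blast
  have cpi: "is_cokernel C \<pi> \<kappa>" using conf ka by blast
  have rdb: "Comp C r db = Comp C c \<rho>"
  proof (rule coker_epi[OF cpi])
    have "Comp C (Comp C r db) \<pi> = Comp C c p" using assoc[of \<pi> db r] r db mq obP by simp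
    also have "\<dots> = Comp C (Comp C c \<rho>) \<pi>" using assoc[of \<pi> \<rho> c] \<rho> m1 ob1 mq obP by simp
    finally show "Comp C (Comp C r db) \<pi> = Comp C (Comp C c \<rho>) \<pi>" .
  qed (use r db \<rho> m1 ob1 obP in auto)
  define i' where "i' = Comp C db m0"
  have mi': "i' \<in> Mor C" "Dom C i' = M" "Cod C i' = Z" using db m5 ob5 unfolding i'_def by auto
  have rm2: "Comp C r i' = Zm C M B"
  proof -
    have "Comp C r i' = Comp C (Comp C r db) m0" unfolding i'_def using assoc[of m0 db r] r db m5 ob5 by simp
    also have "\<dots> = Comp C c (Comp C \<rho> m0)" using rdb assoc[of m0 \<rho> c] \<rho> m1 ob1 m5 ob5 by simp
    also have "\<dots> = Zm C M B" using rm m1 ob1 obj5 by simp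
    finally show ?thesis .
  qed
  have mono0: "\<And>u. u \<in> Mor C \<Longrightarrow> Cod C u = M \<Longrightarrow> Comp C i' u = Zm C (Dom C u) Z \<Longrightarrow> u = Zm C (Dom C u) M"
  proof -
    fix u assume u: "u \<in> Mor C" "Cod C u = M" "Comp C i' u = Zm C (Dom C u) Z"
    obtain x where x: "Dom C u = x" by blast
    have xo: "x \<in> Obj C" using x u dom_obj by blast
    have "Comp C db (Comp C m0 u) = Zm C x Z" using u x assoc[of u m0 db] db m5 ob5 unfolding i'_def by simp
    then obtain v where v: "v \<in> Mor C" "Dom C v = x" "Cod C v = A1" "Comp C q v = Comp C m0 u"
      using ker_factor[OF kq, of "Comp C m0 u"] u x m5 ob5 db obP by auto
    have "Comp C j v = Comp C \<rho> (Comp C q v)" using \<rho> assoc[of v q \<rho>] v mq obP by simp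
    also have "\<dots> = Comp C (Comp C \<rho> m0) u" using v assoc[of u m0 \<rho>] u \<rho> m5 ob5 by simp
    also have "\<dots> = Comp C j (Zm C x A1)" using rm u x xo m1 ob1 obj obj1 by simp
    finally have jv: "Comp C j v = Comp C j (Zm C x A1)" .
    have v0: "v = Zm C x A1" by (rule ker_mono[OF kj _ _ _ _ _ jv]) (use v m1 ob1 xo obj1 in auto)
    have "Comp C m0 u = Comp C q v" using v(4) by simp
    also have "\<dots> = Comp C q (Zm C x A1)" using v0 by simp
    also have "\<dots> = Zm C x P" using mq obP xo obj1 by simp
    also have "\<dots> = Comp C m0 (Zm C x M)" using m5 ob5 xo obj5 by simp
    finally have mu: "Comp C m0 u = Comp C m0 (Zm C x M)" .
    have "u = Zm C x M" by (rule ker_mono[OF km _ _ _ _ _ mu]) (use u x xo m5 ob5 obj5 in auto)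
    then show "u = Zm C (Dom C u) M" using x by simp
  qed
  have ki': "is_kernel C i' e'"
  proof (rule ker_intro)
    have "Comp C j' (Comp C e' i') = Comp C r i'" using s8(7) assoc[of i' e' j'] mi' m8 ob8 by simp
    also have "\<dots> = Comp C j' (Zm C M A3)" using rm2 m8 ob8 obj5 by simp
    finally have jj: "Comp C j' (Comp C e' i') = Comp C j' (Zm C M A3)" .
    have "Comp C e' i' = Zm C M A3" by (rule ker_mono[OF kj' _ _ _ _ _ jj]) (use mi' m8 ob8 obj5 obj8 in auto)
    then show "Comp C e' i' = Zm C (Dom C i') (Cod C e')" using mi' ob8 by simp
  next
    fix h assume h: "h \<in> Mor C" "Cod C h = Dom C e'" "Comp C e' h = Zm C (Dom C h) (Cod C e')"
    obtain x where x: "Dom C h = x" by blast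
    have xo: "x \<in> Obj C" using x h dom_obj by blast
    have hZ: "Cod C h = Z" "Comp C e' h = Zm C x A3" using h x ob8 by auto
    have "deflation E db" using qdb unfolding deflation_def by blast
    then obtain \<sigma> ht where pbh: "is_pullback C h db \<sigma> ht" "deflation E \<sigma>" using R2[of db h] h hZ db by auto
    note pbhb = pb_basic[OF pbh(1)]
    obtain xt where obh: "Dom C \<sigma> = xt" "Dom C ht = xt" "Cod C \<sigma> = x" "Cod C ht = P" using pbhb x db by metis
    have mh: "\<sigma> \<in> Mor C" "ht \<in> Mor C" using pbhb by auto
    have xto: "xt \<in> Obj C" using obh mh dom_obj by metis
    have hs: "Comp C h \<sigma> = Comp C db ht" using pbhb by auto
    have "Comp C c (Comp C \<rho> ht) = Comp C r (Comp C db ht)" using assoc[of ht \<rho> c] assoc[of ht db r] rdb \<rho> m1 ob1 mh obh r db by simp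
    also have "\<dots> = Comp C (Comp C j' e') (Comp C h \<sigma>)" using hs s8(7) by simp
    also have "\<dots> = Comp C j' (Comp C e' (Comp C h \<sigma>))" using assoc[of "Comp C h \<sigma>" e' j'] h hZ mh obh m8 ob8 x by simp
    also have "\<dots> = Comp C j' (Comp C (Comp C e' h) \<sigma>)" using assoc[of \<sigma> h e'] h hZ mh obh m8 ob8 x by simp
    also have "\<dots> = Comp C j' (Zm C xt A3)" using hZ(2) mh obh xo obj8 by simp
    also have "\<dots> = Zm C xt B" using m8 ob8 xto by simp
    finally obtain w0 where w0: "w0 \<in> Mor C" "Dom C w0 = xt" "Cod C w0 = A1" "Comp C j w0 = Comp C \<rho> ht"
      using ker_factor[OF kj, of "Comp C \<rho> ht"] \<rho> mh obh m1 ob1 by auto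
    define z where "z = Add C ht (neg (Comp C q w0))"
    have qw: "Comp C q w0 \<in> Mor C" "Dom C (Comp C q w0) = xt" "Cod C (Comp C q w0) = P" using w0 mq obP by auto
    have mz: "z \<in> Mor C" "Dom C z = xt" "Cod C z = P" unfolding z_def using qw mh obh by auto
    have "Comp C \<rho> z = Add C (Comp C \<rho> ht) (neg (Comp C \<rho> (Comp C q w0)))"
      unfolding z_def using comp_sub_l[of ht "Comp C q w0" \<rho>] qw mh obh \<rho> by simp
    also have "\<dots> = Add C (Comp C j w0) (neg (Comp C j w0))" using w0 assoc[of w0 q \<rho>] \<rho> mq obP by simp
    also have "\<dots> = Zm C xt A0" using add_neg[of "Comp C j w0"] w0(1-3) m1 ob1 by simp
    also have "\<dots> = Comp C j2 (Zm C xt A4)" using m5 ob5 xto obj5 by simp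
    finally have jz: "Comp C j2 (Comp C e2 z) = Comp C j2 (Zm C xt A4)" using s5(7) assoc[of z e2 j2] mz m5 ob5 by simp
    have "Comp C e2 z = Zm C xt A4" by (rule ker_mono[OF kj2 _ _ _ _ _ jz]) (use mz m5 ob5 xto obj5 in auto)
    then obtain u' where u': "u' \<in> Mor C" "Dom C u' = xt" "Cod C u' = M" "Comp C m0 u' = z"
      using ker_factor[OF km, of z] mz m5 ob5 by auto
    have iu': "Comp C i' u' = Comp C h \<sigma>"
    proof -
      have "Comp C i' u' = Comp C db z" unfolding i'_def using assoc[of u' m0 db] u' m5 ob5 db by simp
      also have "\<dots> = Add C (Comp C db ht) (neg (Comp C db (Comp C q w0)))"
        unfolding z_def using comp_sub_l[of ht "Comp C q w0" db] qw mh obh db by simp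
      also have "\<dots> = Add C (Comp C db ht) (Zm C xt Z)"
      proof -
        have "Comp C db (Comp C q w0) = Comp C (Comp C db q) w0" using assoc[of w0 q db] db w0 mq obP by simp
        also have "\<dots> = Zm C xt Z" using db w0 obj obj1 by simp
        finally show ?thesis using xto obj by simp
      qed
      also have "\<dots> = Comp C h \<sigma>" using hs add_zero[of "Comp C db ht" xt Z] db mh obh by simp
      finally show ?thesis .
    qed
    obtain \<tau> where ta: "(\<tau>, \<sigma>) \<in> E" using pbh(2) unfolding deflation_def by blast
    note tab = E_basic[OF ta]
    obtain TT where obt: "Dom C \<tau> = TT" "Cod C \<tau> = xt" using tab obh by metis
    have mt: "\<tau> \<in> Mor C" using tab by auto
    have TTo: "TT \<in> Obj C" using obt mt dom_obj by metis
    have cs: "is_cokernel C \<sigma> \<tau>" using conf ta by blast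
    have "Comp C i' (Comp C u' \<tau>) = Comp C (Comp C i' u') \<tau>" using assoc[of \<tau> u' i'] mi' u' mt obt by simp
    also have "\<dots> = Comp C (Comp C h \<sigma>) \<tau>" using iu' by simp
    also have "\<dots> = Comp C h (Comp C \<sigma> \<tau>)" using assoc[of \<tau> \<sigma> h] mt obt mh obh h(1) hZ(1) x by simp
    also have "\<dots> = Zm C TT Z" using tab obt obh h(1) hZ(1) x TTo by simp
    finally have "Comp C u' \<tau> = Zm C TT M" using mono0[of "Comp C u' \<tau>"] u' mt obt by simp
    then obtain u where u: "u \<in> Mor C" "Dom C u = x" "Cod C u = M" "Comp C u \<sigma> = u'"
      using coker_factor[OF cs, of u'] u' mt obt obh by auto
    have "Comp C i' u = h"
    proof (rule coker_epi[OF cs])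
      show "Comp C (Comp C i' u) \<sigma> = Comp C h \<sigma>" using assoc[of \<sigma> u i'] u mi' mh obh iu' by simp
    qed (use u mi' h hZ x obh in auto)
    then show "\<exists>u. u \<in> Mor C \<and> Dom C u = Dom C h \<and> Cod C u = Dom C i' \<and> Comp C i' u = h" using u x mi' by auto
  next
    fix u1 u2 assume b: "u1 \<in> Mor C" "u2 \<in> Mor C" "Dom C u2 = Dom C u1" "Cod C u1 = Dom C i'" "Cod C u2 = Dom C i'"
      "Comp C i' u1 = Comp C i' u2"
    have "Comp C i' (Add C u1 (neg u2)) = Add C (Comp C i' u1) (neg (Comp C i' u2))"
      using comp_sub_l[of u1 u2 i'] b mi' by simp
    also have "\<dots> = Zm C (Dom C u1) Z" using b mi' by simp
    finally have "Add C u1 (neg u2) = Zm C (Dom C u1) M" using mono0[of "Add C u1 (neg u2)"] b mi' by simp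
    then show "u1 = u2" using sub_zero_eq[of u1 u2] b mi' by simp
  qed (use mi' m8 ob8 in auto)
  have "(i', e') \<in> E" using ker_E[OF s8(1) ki'] .
  then have IAi': "IA i'" using s8(4) unfolding IA_def by blast
  have "Comp C d i = Comp C i' d2"
  proof -
    have "Comp C d i = Comp C db (Comp C \<pi> i)" using db(4)[symmetric] assoc[of i \<pi> db] db mq obP m ob by simp
    also have "\<dots> = Comp C i' d2" unfolding i'_def using d2 assoc[of d2 m0 db] db m5 ob5 by simp
    finally show ?thesis .
  qed
  moreover have "Cod C d2 = Dom C i'" using d2 mi' by simp
  ultimately show ?thesis using IAi' DAd2 by blast
qed

end


context pc begin

lemma id_S: "Y \<in> Obj C \<Longrightarrow> Id C Y \<in> S"
  using id_infl[of Y] weak_isos.infl by metis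

lemma RMS3: "s \<in> S \<Longrightarrow> f \<in> Mor C \<Longrightarrow> g \<in> Mor C \<Longrightarrow> Dom C g = Dom C f \<Longrightarrow> Cod C g = Cod C f \<Longrightarrow>
  Dom C s = Cod C f \<Longrightarrow> Comp C s f = Comp C s g \<Longrightarrow> \<exists>t\<in>S. Cod C t = Dom C f \<and> Comp C f t = Comp C g t"
proof (induction s arbitrary: f g rule: weak_isos.induct)
  case (infl i p)
  have "f = g" by (rule ker_mono[OF conf[OF infl(1), THEN conjunct1]]) (use infl in auto)
  have idS: "Id C (Dom C f) \<in> S" using id_S dom_obj infl(3) by blast
  show ?case by (rule bexI[OF _ idS]) (use \<open>f = g\<close> infl in simp)
next
  case (defl k d)
  note kb = E_basic[OF defl(1)]
  obtain X Y Z K where ob: "Dom C f = X" "Cod C f = Y" "Dom C d = Y" "Cod C d = Z" "Dom C k = K" "Cod C k = Y"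
    using defl kb by metis
  have m: "k \<in> Mor C" "d \<in> Mor C" using kb by auto
  have obj: "X \<in> Obj C" "Y \<in> Obj C" "Z \<in> Obj C" "K \<in> Obj C" using ob m defl dom_obj cod_obj by metis+
  have K: "K \<in> A" using defl ob by simp
  let ?phi = "Add C f (neg g)"
  have phi: "?phi \<in> Mor C" "Dom C ?phi = X" "Cod C ?phi = Y" using defl ob by auto
  have "Comp C d ?phi = Add C (Comp C d f) (neg (Comp C d g))" using comp_sub_l[of f g d] defl ob m by simp
  also have "\<dots> = Zm C X Z" using add_neg[of "Comp C d g"] defl ob m by simp
  finally obtain u where u: "u \<in> Mor C" "Dom C u = X" "Cod C u = K" "Comp C k u = ?phi"
    using ker_factor[OF conf[OF defl(1), THEN conjunct1], of ?phi] phi ob by auto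
  have h: "u \<in> Mor C" "Cod C u \<in> A" using u K by auto
  obtain k2 e j p2 where A2r: "(k2,e) \<in> E" "(j,p2) \<in> E" "Cod C e = Dom C j" "Cod C e \<in> A"
   "Dom C e = Dom C u" "Cod C j = Cod C u" "u = Comp C j e"
    using A2[OF h] by blast
  note keb = E_basic[OF A2r(1)] and jb = E_basic[OF A2r(2)]
  obtain T A1 where ob2: "Dom C k2 = T" "Cod C k2 = X" "Dom C e = X" "Cod C e = A1" "Dom C j = A1" "Cod C j = K"
    using A2r keb u by metis
  have m2: "k2 \<in> Mor C" "e \<in> Mor C" "j \<in> Mor C" using keb jb by auto
  have obj2: "T \<in> Obj C" "A1 \<in> Obj C" using ob2 m2 dom_obj cod_obj by metis+
  have k2S: "k2 \<in> S" by (rule weak_isos.infl[OF A2r(1) A2r(4)])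
  have "Comp C ?phi k2 = Comp C (Comp C k u) k2" using u(4) by simp
  also have "\<dots> = Comp C k (Comp C u k2)" using assoc[of k2 u k] m m2 ob ob2 u by simp
  also have "\<dots> = Comp C k (Comp C (Comp C j e) k2)" using A2r(7) by simp
  also have "\<dots> = Comp C k (Comp C j (Comp C e k2))" using assoc[of k2 e j] m2 ob2 by simp
  finally have "Comp C ?phi k2 = Comp C k (Comp C j (Comp C e k2))" .
  also have "\<dots> = Zm C T Y" using keb m m2 ob ob2 obj obj2 by simp
  finally have "Add C (Comp C f k2) (neg (Comp C g k2)) = Zm C T Y"
    using comp_sub_r[of f g k2] defl ob ob2 m2 by simp
  moreover have fk: "Comp C f k2 \<in> Mor C" "Dom C (Comp C f k2) = T" "Cod C (Comp C f k2) = Y"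
    using defl(3) ob ob2 m2 by auto
  moreover have gk: "Comp C g k2 \<in> Mor C" "Dom C (Comp C g k2) = T" "Cod C (Comp C g k2) = Y"
    using defl(3-6) ob ob2 m2 by auto
  ultimately have "Comp C f k2 = Comp C g k2"
    using sub_zero_eq[of "Comp C f k2" "Comp C g k2"] by simp
  then show ?case using k2S ob ob2 by auto
next
  case (comp s t)
  note ms = S_mor[OF comp.hyps(1)] and mt = S_mor[OF comp.hyps(2)]
  have e: "Comp C t (Comp C s f) = Comp C t (Comp C s g)"
    using comp.prems assoc[of f s t] assoc[of g s t] ms mt comp.hyps(3) by simp
  have sf: "Comp C s f \<in> Mor C" "Comp C s g \<in> Mor C" "Dom C (Comp C s g) = Dom C (Comp C s f)"
     "Cod C (Comp C s g) = Cod C (Comp C s f)" "Dom C t = Cod C (Comp C s f)"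
    using comp.prems ms mt comp.hyps(3) by auto
  have ds: "Dom C s = Cod C f" using comp.prems(5) ms mt comp.hyps(3) by simp
  have dsf: "Dom C (Comp C s f) = Dom C f" using comp.prems ms ds by simp
  obtain t1 where t1: "t1 \<in> S" "Cod C t1 = Dom C f" "Comp C (Comp C s f) t1 = Comp C (Comp C s g) t1"
    using comp.IH(2)[OF sf e] dsf by auto
  note mt1 = S_mor[OF t1(1)]
  have e2: "Comp C s (Comp C f t1) = Comp C s (Comp C g t1)"
    using t1 assoc[of t1 f s] assoc[of t1 g s] comp.prems ms mt1 ds by simp
  have sf2: "Comp C f t1 \<in> Mor C" "Comp C g t1 \<in> Mor C" "Dom C (Comp C g t1) = Dom C (Comp C f t1)"
     "Cod C (Comp C g t1) = Cod C (Comp C f t1)" "Dom C s = Cod C (Comp C f t1)"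
    using comp.prems mt1 t1 ds by auto
  obtain t2 where t2: "t2 \<in> S" "Cod C t2 = Dom C (Comp C f t1)" "Comp C (Comp C f t1) t2 = Comp C (Comp C g t1) t2"
    using comp.IH(1)[OF sf2 e2] by blast
  note mt2 = S_mor[OF t2(1)]
  have c: "Cod C t2 = Dom C t1" using t2(2) t1 comp.prems mt1 by simp
  have "Comp C t1 t2 \<in> S" by (rule weak_isos.comp[OF t2(1) t1(1) c])
  moreover have "Comp C f (Comp C t1 t2) = Comp C g (Comp C t1 t2)"
    using t2(3) assoc[of t2 t1 f] assoc[of t2 t1 g] comp.prems mt1 mt2 c t1 by simp
  moreover have "Cod C (Comp C t1 t2) = Dom C f" using mt1 mt2 c t1 by simp
  ultimately show ?case by blast
qed

end


context pc begin

lemma IA_id: "Y \<in> Obj C \<Longrightarrow> IA (Id C Y)" using id_infl[of Y] unfolding IA_def by blast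
lemma DA_id: "Y \<in> Obj C \<Longrightarrow> DA (Id C Y)" using id_defl[of Y] unfolding DA_def by blast
lemma IA_mor: "IA i \<Longrightarrow> i \<in> Mor C" unfolding IA_def using E_basic by blast
lemma DA_mor: "DA d \<Longrightarrow> d \<in> Mor C" unfolding DA_def using E_basic by blast

lemma NF: "s \<in> S \<Longrightarrow> \<exists>i d. IA i \<and> DA d \<and> Cod C d = Dom C i \<and> s = Comp C i d"
proof (induction rule: weak_isos.induct)
  case (infl f g)
  note b = E_basic[OF infl(1)]
  have "IA f" using infl unfolding IA_def by blast
  moreover have "DA (Id C (Dom C f))" using DA_id b by simp
  moreover have "f = Comp C f (Id C (Dom C f))" using b by simp
  ultimately show ?case using b by (intro exI[of _ f] exI[of _ "Id C (Dom C f)"]) simp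
next
  case (defl f g)
  note b = E_basic[OF defl(1)]
  have "DA g" using defl unfolding DA_def by blast
  moreover have "IA (Id C (Cod C g))" using IA_id b by simp
  moreover have "g = Comp C (Id C (Cod C g)) g" using b by simp
  ultimately show ?case using b by (intro exI[of _ "Id C (Cod C g)"] exI[of _ g]) simp
next
  case (comp s t)
  obtain i1 d1 where s: "IA i1" "DA d1" "Cod C d1 = Dom C i1" "s = Comp C i1 d1" using comp.IH(1) by blast
  obtain i2 d2 where t: "IA i2" "DA d2" "Cod C d2 = Dom C i2" "t = Comp C i2 d2" using comp.IH(2) by blast
  have m: "i1 \<in> Mor C" "d1 \<in> Mor C" "i2 \<in> Mor C" "d2 \<in> Mor C" using s t IA_mor DA_mor by auto
  have c: "Cod C i1 = Dom C d2" using comp.hyps(3) s t m by simp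
  obtain i' d' where sw: "IA i'" "DA d'" "Cod C d' = Dom C i'" "Comp C d2 i1 = Comp C i' d'"
    using swap[OF s(1) t(2) c] by blast
  have m2: "i' \<in> Mor C" "d' \<in> Mor C" using sw IA_mor DA_mor by auto
  have c2: "Dom C d' = Dom C i1" "Cod C i' = Cod C d2"
  proof -
    have "Dom C (Comp C d2 i1) = Dom C i1" "Cod C (Comp C d2 i1) = Cod C d2" using m c by auto
    then show "Dom C d' = Dom C i1" "Cod C i' = Cod C d2" using sw(3,4) m2 by auto
  qed
  have "IA (Comp C i2 i')" using IA_comp[OF sw(1) t(1)] c2 t(3) by simp
  moreover have "DA (Comp C d' d1)" using DA_comp[OF s(2) sw(2)] c2 s(3) by simp
  moreover have "Cod C (Comp C d' d1) = Dom C (Comp C i2 i')" using m m2 c2 s(3) t(3) sw(3) by simp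
  moreover have "Comp C t s = Comp C (Comp C i2 i') (Comp C d' d1)"
  proof -
    have "Comp C t s = Comp C i2 (Comp C (Comp C d2 i1) d1)"
      using s(4) t(4) assoc[of d1 i1 d2] assoc[of "Comp C i1 d1" d2 i2] assoc[of d1 i1 d2] m c s(3) t(3) by simp
    also have "\<dots> = Comp C i2 (Comp C i' (Comp C d' d1))" using sw(4) assoc[of d1 d' i'] m m2 c2 s(3) sw(3) by simp
    also have "\<dots> = Comp C (Comp C i2 i') (Comp C d' d1)" using assoc[of "Comp C d' d1" i' i2] m m2 c2 s(3) t(3) sw(3) by simp
    finally show ?thesis .
  qed
  ultimately show ?case by blast
qed

lemma S_adm: "s \<in> S \<Longrightarrow> s \<in> admissible C E"
proof -
  assume "s \<in> S"
  then obtain i d where nf: "IA i" "DA d" "Cod C d = Dom C i" "s = Comp C i d" using NF by blast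
  have "inflation E i" "deflation E d" using nf unfolding IA_def DA_def inflation_def deflation_def by blast+
  then show ?thesis using nf unfolding admissible_def by blast
qed

lemma main: "S = S \<inter> admissible C E \<and> right_mult_system C S \<and> RMS2_pullback C S"
proof (intro conjI)
  show "S = S \<inter> admissible C E" using S_adm by blast
  show "RMS2_pullback C S" unfolding RMS2_pullback_def using RMS2pb by blast
  show "right_mult_system C S" unfolding right_mult_system_def
  proof (intro conjI ballI impI)
    show "S \<subseteq> Mor C" using S_mor by blast
  next
    fix a assume "a \<in> Obj C" then show "Id C a \<in> S" by (rule id_S)
  next
    fix s t assume "s \<in> S" "t \<in> S" "Cod C s = Dom C t" then show "Comp C t s \<in> S" by (rule weak_isos.comp)
  next
    fix f s assume a: "f \<in> Mor C" "s \<in> S" "Cod C f = Cod C s"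
    then obtain t g where "t \<in> S" "is_pullback C f s t g" using RMS2pb by blast
    then show "\<exists>t g. t \<in> S \<and> g \<in> Mor C \<and> Cod C t = Dom C f \<and> Cod C g = Dom C s \<and> Dom C t = Dom C g \<and> Comp C f t = Comp C s g"
      using pb_basic by blast
  next
    fix f g s assume a: "f \<in> Mor C" "g \<in> Mor C" "s \<in> S"
      "Dom C f = Dom C g \<and> Cod C f = Cod C g \<and> Dom C s = Cod C f \<and> Comp C s f = Comp C s g"
    then show "\<exists>t\<in>S. Cod C t = Dom C f \<and> Comp C f t = Comp C g t" using RMS3[of s f g] by auto
  qed
qed

end

theorem mainTheorem1:
  fixes C :: "('o,'m,'x) addcat_scheme" and E :: "('m \<times> 'm) set" and A :: "'o set"
  assumes "deflation_exact C E"
    and "adm_defl_percolating C E A"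
  shows "weak_isos C E A = weak_isos C E A \<inter> admissible C E \<and>
         right_mult_system C (weak_isos C E A) \<and>
         RMS2_pullback C (weak_isos C E A)"
proof -
  interpret pc C E A by unfold_locales (rule assms(1), rule assms(2))
  show ?thesis by (rule main)
qed


end
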